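(* Let $\kappa$ be an infinite cardinal and let $G$ be a topological gyrogroup. If $G$ has one of the following properties, then $G^{\bullet}$ has the same property: (1) $G$ is metrizable; (2) $G$ has a local base at the identity of cardinality $\le\kappa$; (3) $G$ has a network of cardinality $\le\kappa$; (4) $G$ has a dense subset of cardinality $\le\kappa$; (5) $G$ is $\kappa$-narrow.
   Context: A gyrogroup is a set $G$ with a binary operation $\oplus$ such that: (G1) there is a unique identity $0$ with $0\oplus a=a=a\oplus 0$; (G2) each $x$ has a unique inverse $\ominus x$ with $\ominus x\oplus x=0=x\oplus(\ominus x)$; (G3) for all $x,y$ there is an automorphism $\mathrm{gyr}[x,y]$ of $(G,\oplus)$ with $x\oplus(y\oplus z)=(x\oplus y)\oplus \mathrm{gyr}[x,y](z)$ for all $z$; (G4) $\mathrm{gyr}[x\oplus y,y]=\mathrm{gyr}[x,y]$. A topological gyrogroup is a gyrogroup with a topology (all spaces are assumed $T_1$) such that $\oplus$ is jointly continuous and $x\mapsto\ominus x$ is continuous. A network of a space $X$ is a family $\mathcal{P}$ of subsets such that for every $x\in X$ and open $U\ni x$ there is $P\in\mathcal{P}$ with $x\in P\subseteq U$. A topological gyrogroup $G$ is left (right) $\kappa$-narrow if for every neighbourhood $U$ of $0$ there is $K\subseteq G$ with $|K|\le\kappa$ and $K\oplus U=G$ (resp. $U\oplus K=G$); it is $\kappa$-narrow if it is both left and right $\kappa$-narrow. Construction: let $J=[0,1)$ and let $G^{\bullet}$ be the set of all functions $f:J\to G$ for which there exist $0=a_0<a_1<\dots<a_n=1$ with $f$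 constant on each $[a_k,a_{k+1})$, with pointwise operation $(f\oplus^{\bullet}g)(r)=f(r)\oplus g(r)$. For an open neighbourhood $V$ of $0$ in $G$ and $\varepsilon>0$ let $O(V,\varepsilon)=\{f\in G^{\bullet}:\mu(\{r\in J: f(r)\notin V\})<\varepsilon\}$, $\mu$ Lebesgue measure. $G^{\bullet}$ carries the topological gyrogroup topology in which the sets $f\oplus^{\bullet}O(V,\varepsilon)$ form a local base at each $f\in G^{\bullet}$. *)

theory Defs
  imports "HOL-Analysis.Analysis" "HOL-Library.Equipollence"
begin

definition gyro_aut :: "'a set \<Rightarrow> ('a \<Rightarrow> 'a \<Rightarrow> 'a) \<Rightarrow> ('a \<Rightarrow> 'a) \<Rightarrow> bool" where
  "gyro_aut G op a \<longleftrightarrow> bij_betw a G G \<and> (\<forall>x\<in>G. \<forall>y\<in>G. a (op x y) = op (a x) (a y))"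

definition gyrogroup :: "'a set \<Rightarrow> ('a \<Rightarrow> 'a \<Rightarrow> 'a) \<Rightarrow> 'a \<Rightarrow> bool" where
  "gyrogroup G op e \<longleftrightarrow>
     e \<in> G \<and> (\<forall>x\<in>G. \<forall>y\<in>G. op x y \<in> G) \<and>
     (\<forall>a\<in>G. op e a = a \<and> op a e = a) \<and>
     (\<forall>x\<in>G. \<exists>y\<in>G. op y x = e \<and> op x y = e) \<and>
     (\<exists>gyr. (\<forall>x\<in>G. \<forall>y\<in>G. gyro_aut G op (gyr x y) \<and>
                 (\<forall>z\<in>G. op x (op y z) = op (op x y) (gyr x y z))) \<and>
            (\<forall>x\<in>G. \<forall>y\<in>G. \<forall>z\<in>G. gyr (op x y) y z = gyr x y z))"

definition ginv :: "'a set \<Rightarrow> ('a \<Rightarrow> 'a \<Rightarrow> 'a) \<Rightarrow> 'a \<Rightarrow> 'a \<Rightarrow> 'a" where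
  "ginv G op e x = (THE y. y \<in> G \<and> op y x = e \<and> op x y = e)"

definition topological_gyrogroup :: "'a set \<Rightarrow> ('a \<Rightarrow> 'a \<Rightarrow> 'a) \<Rightarrow> 'a \<Rightarrow> 'a topology \<Rightarrow> bool" where
  "topological_gyrogroup G op e T \<longleftrightarrow>
     gyrogroup G op e \<and> topspace T = G \<and> t1_space T \<and>
     continuous_map (prod_topology T T) T (\<lambda>(x, y). op x y) \<and>
     continuous_map T T (ginv G op e)"

text \<open>Functions J = [0,1) \<rightarrow> G, represented as functions real \<Rightarrow> 'a that
  equal the identity e outside J, which are step functions for a finite
  partition 0 = a_0 < ... < a_n = 1 (constant on each [a_k, a_{k+1})).\<close>
definition gbullet :: "'a set \<Rightarrow> 'a \<Rightarrow> (real \<Rightarrow> 'a) set" where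
  "gbullet G e = {f. (\<forall>r. r \<notin> {0..<1} \<longrightarrow> f r = e) \<and> (\<forall>r\<in>{0..<1}. f r \<in> G) \<and>
      (\<exists>(n::nat) (a::nat \<Rightarrow> real). a 0 = 0 \<and> a n = 1 \<and> (\<forall>k<n. a k < a (Suc k)) \<and>
          (\<forall>k<n. \<forall>r\<in>{a k..<a (Suc k)}. f r = f (a k)))}"

definition bop :: "('a \<Rightarrow> 'a \<Rightarrow> 'a) \<Rightarrow> (real \<Rightarrow> 'a) \<Rightarrow> (real \<Rightarrow> 'a) \<Rightarrow> (real \<Rightarrow> 'a)" where
  "bop op f g = (\<lambda>r. op (f r) (g r))"

definition Obullet :: "'a set \<Rightarrow> 'a \<Rightarrow> 'a set \<Rightarrow> real \<Rightarrow> (real \<Rightarrow> 'a) set" where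
  "Obullet G e V \<epsilon> = {f \<in> gbullet G e. measure lborel {r \<in> {0..<1}. f r \<notin> V} < \<epsilon>}"

text \<open>The topology on G-bullet in which the sets f (+) O(V,eps), V an open
  neighbourhood of e in G and eps > 0, form a local (neighbourhood) base at f.\<close>
definition bullet_topology :: "'a set \<Rightarrow> ('a \<Rightarrow> 'a \<Rightarrow> 'a) \<Rightarrow> 'a \<Rightarrow> 'a topology \<Rightarrow> (real \<Rightarrow> 'a) topology" where
  "bullet_topology G op e T = topology (\<lambda>U. U \<subseteq> gbullet G e \<and>
      (\<forall>f\<in>U. \<exists>V \<epsilon>. openin T V \<and> e \<in> V \<and> \<epsilon> > 0 \<and> bop op f ` Obullet G e V \<epsilon> \<subseteq> U))"

section \<open>Cardinal properties (cardinal bounded by |K|)\<close>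

definition has_local_base_card :: "'a topology \<Rightarrow> 'a \<Rightarrow> 'k set \<Rightarrow> bool" where
  "has_local_base_card T x K \<longleftrightarrow> (\<exists>\<B>. \<B> \<lesssim> K \<and> (\<forall>B\<in>\<B>. openin T B \<and> x \<in> B) \<and>
      (\<forall>U. openin T U \<and> x \<in> U \<longrightarrow> (\<exists>B\<in>\<B>. B \<subseteq> U)))"

definition is_network :: "'a topology \<Rightarrow> 'a set set \<Rightarrow> bool" where
  "is_network T \<P> \<longleftrightarrow> (\<forall>P\<in>\<P>. P \<subseteq> topspace T) \<and>
      (\<forall>x U. openin T U \<and> x \<in> U \<longrightarrow> (\<exists>P\<in>\<P>. x \<in> P \<and> P \<subseteq> U))"

definition has_network_card :: "'a topology \<Rightarrow> 'k set \<Rightarrow> bool" where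
  "has_network_card T K \<longleftrightarrow> (\<exists>\<P>. \<P> \<lesssim> K \<and> is_network T \<P>)"

definition has_dense_card :: "'a topology \<Rightarrow> 'k set \<Rightarrow> bool" where
  "has_dense_card T K \<longleftrightarrow> (\<exists>D. D \<subseteq> topspace T \<and> D \<lesssim> K \<and> T closure_of D = topspace T)"

definition left_narrow :: "'a topology \<Rightarrow> ('a \<Rightarrow> 'a \<Rightarrow> 'a) \<Rightarrow> 'a \<Rightarrow> 'k set \<Rightarrow> bool" where
  "left_narrow T op e K \<longleftrightarrow> (\<forall>U. U \<subseteq> topspace T \<and> e \<in> T interior_of U \<longrightarrow>
      (\<exists>S. S \<subseteq> topspace T \<and> S \<lesssim> K \<and> {op s u | s u. s \<in> S \<and> u \<in> U} = topspace T))"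

definition right_narrow :: "'a topology \<Rightarrow> ('a \<Rightarrow> 'a \<Rightarrow> 'a) \<Rightarrow> 'a \<Rightarrow> 'k set \<Rightarrow> bool" where
  "right_narrow T op e K \<longleftrightarrow> (\<forall>U. U \<subseteq> topspace T \<and> e \<in> T interior_of U \<longrightarrow>
      (\<exists>S. S \<subseteq> topspace T \<and> S \<lesssim> K \<and> {op u s | s u. s \<in> S \<and> u \<in> U} = topspace T))"

definition narrow :: "'a topology \<Rightarrow> ('a \<Rightarrow> 'a \<Rightarrow> 'a) \<Rightarrow> 'a \<Rightarrow> 'k set \<Rightarrow> bool" where
  "narrow T op e K \<longleftrightarrow> left_narrow T op e K \<and> right_narrow T op e K"

end

theory Submission
  imports Defs
begin

locale gg =
  fixes G :: "'a set" and op :: "'a \<Rightarrow> 'a \<Rightarrow> 'a" and e :: 'a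
  assumes gyro: "gyrogroup G op e"
begin

lemma e_in [simp]: "e \<in> G" using gyro by (simp add: gyrogroup_def)
lemma op_in [simp]: "x \<in> G \<Longrightarrow> y \<in> G \<Longrightarrow> op x y \<in> G" using gyro by (simp add: gyrogroup_def)
lemma lid [simp]: "a \<in> G \<Longrightarrow> op e a = a" using gyro by (simp add: gyrogroup_def)
lemma rid [simp]: "a \<in> G \<Longrightarrow> op a e = a" using gyro by (simp add: gyrogroup_def)
lemma ex_inv: "x \<in> G \<Longrightarrow> \<exists>y\<in>G. op y x = e \<and> op x y = e" using gyro by (simp add: gyrogroup_def)

lemma gyr_ex: "\<exists>gyr. (\<forall>x\<in>G. \<forall>y\<in>G. gyro_aut G op (gyr x y) \<and>
                 (\<forall>z\<in>G. op x (op y z) = op (op x y) (gyr x y z))) \<and>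
            (\<forall>x\<in>G. \<forall>y\<in>G. \<forall>z\<in>G. gyr (op x y) y z = gyr x y z)"
  using gyro by (simp add: gyrogroup_def)

lemma cancel_inj:
  assumes a: "a \<in> G" and b: "b \<in> G" and c: "c \<in> G" and eq: "op a b = op a c"
  shows "b = c"
proof -
  obtain gyr where g1: "\<forall>x\<in>G. \<forall>y\<in>G. gyro_aut G op (gyr x y) \<and>
                 (\<forall>z\<in>G. op x (op y z) = op (op x y) (gyr x y z))" using gyr_ex by blast
  obtain y where y: "y \<in> G" "op y a = e" using ex_inv[OF a] by blast
  have bij: "bij_betw (gyr y a) G G" using g1 y a by (simp add: gyro_aut_def)
  have "op y (op a b) = gyr y a b" using g1 y a b bij
    by (metis bij_betw_apply lid)
  moreover have "op y (op a c) = gyr y a c" using g1 y a c bij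
    by (metis bij_betw_apply lid)
  ultimately have "gyr y a b = gyr y a c" using eq by simp
  then show ?thesis using bij b c by (metis bij_betw_imp_inj_on inj_onD)
qed

lemma ginv_prop:
  assumes x: "x \<in> G"
  shows "ginv G op e x \<in> G \<and> op (ginv G op e x) x = e \<and> op x (ginv G op e x) = e"
proof -
  obtain y where y: "y \<in> G" "op y x = e" "op x y = e" using ex_inv[OF x] by blast
  have "\<And>z. z \<in> G \<and> op z x = e \<and> op x z = e \<Longrightarrow> z = y"
    using cancel_inj[OF x] y by metis
  then show ?thesis unfolding ginv_def using y by (rule_tac theI2[of _ y]) blast+
qed

lemma ginv_in [simp]: "x \<in> G \<Longrightarrow> ginv G op e x \<in> G" using ginv_prop by blast
lemma ginv_l [simp]: "x \<in> G \<Longrightarrow> op (ginv G op e x) x = e" using ginv_prop by blast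
lemma ginv_r [simp]: "x \<in> G \<Longrightarrow> op x (ginv G op e x) = e" using ginv_prop by blast

lemma ginv_unique: "x \<in> G \<Longrightarrow> y \<in> G \<Longrightarrow> op x y = e \<Longrightarrow> ginv G op e x = y"
  using cancel_inj[of x "ginv G op e x" y] by simp

lemma ginv_e [simp]: "ginv G op e e = e" using ginv_unique[of e e] by simp

lemma ginv_ginv [simp]: "x \<in> G \<Longrightarrow> ginv G op e (ginv G op e x) = x"
  using ginv_unique[of "ginv G op e x" x] by simp

lemma lcancel [simp]:
  assumes a: "a \<in> G" and b: "b \<in> G"
  shows "op (ginv G op e a) (op a b) = b"
proof -
  obtain gyr where g1: "\<forall>x\<in>G. \<forall>y\<in>G. gyro_aut G op (gyr x y) \<and>
                 (\<forall>z\<in>G. op x (op y z) = op (op x y) (gyr x y z))"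
     and g2: "\<forall>x\<in>G. \<forall>y\<in>G. \<forall>z\<in>G. gyr (op x y) y z = gyr x y z" using gyr_ex by blast
  let ?i = "ginv G op e a"
  have i: "?i \<in> G" using a by simp
  have ge: "\<And>z. z \<in> G \<Longrightarrow> gyr e a z = z"
  proof -
    fix z assume z: "z \<in> G"
    have bij: "bij_betw (gyr e a) G G" using g1 a by (simp add: gyro_aut_def)
    have "op e (op a z) = op (op e a) (gyr e a z)" using g1 a z by simp
    then have "op a z = op a (gyr e a z)" using a z by simp
    then show "gyr e a z = z" using cancel_inj[OF a z] bij z by (metis bij_betw_apply)
  qed
  have "op ?i (op a b) = op (op ?i a) (gyr ?i a b)" using g1 i a b by simp
  also have "\<dots> = gyr ?i a b"
  proof -
    have "gyr ?i a b \<in> G" using g1 i a b by (meson bij_betw_apply gyro_aut_def)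
    then show ?thesis using a by simp
  qed
  also have "\<dots> = gyr (op ?i a) a b" using g2 i a b by (intro g2[rule_format, symmetric])
  also have "\<dots> = b" using ge a b by simp
  finally show ?thesis .
qed

lemma lcancel2 [simp]:
  assumes a: "a \<in> G" and b: "b \<in> G"
  shows "op a (op (ginv G op e a) b) = b"
  using lcancel[of "ginv G op e a" b] a b by simp

end

locale tgg = gg +
  fixes T :: "'a topology"
  assumes tg: "topological_gyrogroup G op e T"
begin

lemma top_G: "topspace T = G" using tg by (simp add: topological_gyrogroup_def)

lemma cont_lmul: assumes c: "c \<in> G" shows "continuous_map T T (\<lambda>x. op c x)"
proof -
  have "continuous_map (prod_topology T T) T (\<lambda>(x, y). op x y)"
    using tg by (simp add: topological_gyrogroup_def)
  moreover have "continuous_map T (prod_topology T T) (\<lambda>x. (c, x))"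
    using c top_G by (intro continuous_map_pairedI) auto
  ultimately have "continuous_map T T ((\<lambda>(x, y). op x y) \<circ> (\<lambda>x. (c, x)))"
    by (intro continuous_map_compose)
  then show ?thesis by (simp add: o_def)
qed

lemma nbhd_lmul:
  assumes c: "c \<in> G" and V: "openin T V" and cv: "op c d \<in> V" and d: "d \<in> G"
  shows "\<exists>W. openin T W \<and> d \<in> W \<and> (\<forall>y\<in>W. op c y \<in> V)"
  using openin_continuous_map_preimage[OF cont_lmul[OF c] V] cv d top_G
  by (rule_tac x="{x \<in> topspace T. op c x \<in> V}" in exI) auto

end


definition stp :: "real set \<Rightarrow> (real \<Rightarrow> 'b) \<Rightarrow> bool" where
  "stp S F \<longleftrightarrow> finite S \<and> (\<forall>x y. 0 \<le> x \<longrightarrow> x \<le> y \<longrightarrow> y < 1 \<longrightarrow> (\<forall>s\<in>S. \<not>(x < s \<and> s \<le> y)) \<longrightarrow> F x = F y)"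

lemma stpD: "stp S F \<Longrightarrow> 0 \<le> x \<Longrightarrow> x \<le> y \<Longrightarrow> y < 1 \<Longrightarrow> (\<And>s. s \<in> S \<Longrightarrow> \<not>(x < s \<and> s \<le> y)) \<Longrightarrow> F x = F y"
  unfolding stp_def by blast

lemma stp_finite: "stp S F \<Longrightarrow> finite S" unfolding stp_def by blast

lemma stp_mono: "stp S F \<Longrightarrow> finite S' \<Longrightarrow> S \<subseteq> S' \<Longrightarrow> stp S' F"
  unfolding stp_def by blast

lemma stp_comb: "stp S F \<Longrightarrow> stp S' H \<Longrightarrow> stp (S \<union> S') (\<lambda>r. \<phi> (F r) (H r))"
  unfolding stp_def by (metis Un_iff finite_Un)

lemma stp_comp: "stp S F \<Longrightarrow> stp S (\<lambda>r. \<phi> (F r))"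
  unfolding stp_def by metis

lemma strict_mono_part:
  assumes "\<forall>k<n. (a::nat\<Rightarrow>real) k < a (Suc k)"
  shows "i < j \<Longrightarrow> j \<le> n \<Longrightarrow> a i < a j"
proof (induction j)
  case 0 then show ?case by simp
next
  case (Suc j)
  then show ?case using assms by (metis less_Suc_eq order.strict_trans Suc_le_lessD less_imp_le_nat)
qed

lemma mono_part:
  assumes "\<forall>k<n. (a::nat\<Rightarrow>real) k < a (Suc k)"
  shows "i \<le> j \<Longrightarrow> j \<le> n \<Longrightarrow> a i \<le> a j"
  using strict_mono_part[OF assms] by (metis le_less)

lemma part_to_stp:
  assumes a0: "a 0 = 0" and an: "a n = 1" and inc: "\<forall>k<n. (a::nat\<Rightarrow>real) k < a (Suc k)"
    and cst: "\<forall>k<n. \<forall>r\<in>{a k..<a (Suc k)}. f r = f (a k)"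
  shows "stp (a ` {..n}) f"
  unfolding stp_def
proof (intro conjI allI impI)
  show "finite (a ` {..n})" by simp
  fix x y assume x0: "0 \<le> x" and xy: "x \<le> y" and y1: "y < 1" and ns: "\<forall>s\<in>a ` {..n}. \<not> (x < s \<and> s \<le> y)"
  define k where "k = (GREATEST k. k \<le> n \<and> a k \<le> x)"
  have ex: "0 \<le> n \<and> a 0 \<le> x" using a0 x0 by simp
  have kP: "k \<le> n \<and> a k \<le> x" unfolding k_def
    by (rule GreatestI_nat[of _ 0 n]) (use ex in auto)
  have kmax: "\<And>j. j \<le> n \<Longrightarrow> a j \<le> x \<Longrightarrow> j \<le> k" unfolding k_def
    by (rule Greatest_le_nat[of _ _ n]) auto
  have kn: "k < n" using kP an y1 xy by (metis le_less less_le_not_le order.strict_trans1)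
  have xk: "x < a (Suc k)" using kmax[of "Suc k"] kn by force
  have "a (Suc k) \<in> a ` {..n}" using kn by simp
  then have yk: "y < a (Suc k)"
  proof (rule_tac ccontr)
    assume m: "a (Suc k) \<in> a ` {..n}" and "\<not> y < a (Suc k)"
    then have "x < a (Suc k) \<and> a (Suc k) \<le> y" using xk by simp
    then show False using ns m by blast
  qed
  have "x \<in> {a k..<a (Suc k)}" using kP xk by simp
  then have "f x = f (a k)" using cst kn by blast
  moreover have "y \<in> {a k..<a (Suc k)}" using kP yk xy by simp
  then have "f y = f (a k)" using cst kn by blast
  ultimately show "f x = f y" by simp
qed

lemma stp_to_part:
  assumes st: "stp S f"
  shows "\<exists>(n::nat) (a::nat \<Rightarrow> real). a 0 = 0 \<and> a n = 1 \<and> (\<forall>k<n. a k < a (Suc k)) \<and>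
          (\<forall>k<n. \<forall>r\<in>{a k..<a (Suc k)}. f r = f (a k))"
proof -
  define A where "A = (S \<inter> {0<..<1}) \<union> {0, 1::real}"
  have fA: "finite A" using st stp_finite unfolding A_def by auto
  define L where "L = sorted_list_of_set A"
  have setL: "set L = A" and srt: "sorted_wrt (<) L"
    using fA by (auto simp: L_def sorted_list_of_set.strict_sorted_key_list_of_set)
  have sL: "sorted L" using srt by (simp add: strict_sorted_iff)
  have A01: "\<And>x. x \<in> A \<Longrightarrow> 0 \<le> x \<and> x \<le> 1" unfolding A_def by auto
  have lenL: "length L \<ge> 2"
  proof -
    have "card A \<ge> 2" unfolding A_def using fA A_def by (simp add: card_insert_if)
    moreover have "length L = card A" using fA by (simp add: L_def)
    ultimately show ?thesis by simp
  qed
  define n where "n = length L - 1"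
  define a where "a k = L ! k" for k
  have nL: "n < length L" using lenL unfolding n_def by simp
  have inA: "\<And>k. k \<le> n \<Longrightarrow> a k \<in> A" using nL setL unfolding a_def by (metis le_less_trans nth_mem)
  have idx: "\<And>x. x \<in> A \<Longrightarrow> \<exists>j\<le>n. a j = x" using setL unfolding a_def n_def
    by (metis in_set_conv_nth Suc_pred' less_Suc_eq_le bot_nat_0.extremum_strict lenL le_less_trans
          pos2 zero_less_iff_neq_zero)
  have mono: "\<And>i j. i \<le> j \<Longrightarrow> j \<le> n \<Longrightarrow> a i \<le> a j" unfolding a_def using sorted_nth_mono[OF sL] nL by (meson le_less_trans)
  have smono: "\<And>i j. i < j \<Longrightarrow> j \<le> n \<Longrightarrow> a i < a j" unfolding a_def using sorted_wrt_nth_less[OF srt] nL by (meson le_less_trans)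
  have a0: "a 0 = 0"
  proof -
    obtain j where "j \<le> n" "a j = 0" using idx[of 0] unfolding A_def by auto
    then have "a 0 \<le> 0" using mono[of 0 j] by simp
    then show ?thesis using A01 inA[of 0] by force
  qed
  have an: "a n = 1"
  proof -
    obtain j where "j \<le> n" "a j = 1" using idx[of 1] unfolding A_def by auto
    then have "1 \<le> a n" using mono[of j n] by simp
    then show ?thesis using A01 inA[of n] by force
  qed
  have inc: "\<forall>k<n. a k < a (Suc k)" using smono by simp
  have cst: "\<forall>k<n. \<forall>r\<in>{a k..<a (Suc k)}. f r = f (a k)"
  proof (intro allI impI ballI)
    fix k r assume kn: "k < n" and r: "r \<in> {a k..<a (Suc k)}"
    have ak0: "0 \<le> a k" using A01 inA kn by simp
    have r1: "r < 1" using r A01[OF inA[of "Suc k"]] kn by auto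
    have "f (a k) = f r"
    proof (rule stpD[OF st ak0 _ r1])
      show "a k \<le> r" using r by simp
      fix s assume s: "s \<in> S"
      show "\<not> (a k < s \<and> s \<le> r)"
      proof
        assume h: "a k < s \<and> s \<le> r"
        then have "s \<in> A" using s ak0 r1 unfolding A_def by auto
        then obtain j where j: "j \<le> n" "a j = s" using idx by blast
        have "k < j" using h j mono[of j k] kn by (metis not_le less_imp_le_nat order.trans not_less)
        then have "a (Suc k) \<le> a j" using mono[of "Suc k" j] j by simp
        then show False using h j r by simp
      qed
    qed
    then show "f r = f (a k)" by simp
  qed
  show ?thesis using a0 an inc cst by blast
qed

lemma gbullet_iff:
  "f \<in> gbullet G e \<longleftrightarrow> (\<forall>r. r \<notin> {0..<1} \<longrightarrow> f r = e) \<and> (\<forall>r\<in>{0..<1}. f r \<in> G) \<and> (\<exists>S. stp S f)"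
proof -
  have "(\<exists>(n::nat) (a::nat \<Rightarrow> real). a 0 = 0 \<and> a n = 1 \<and> (\<forall>k<n. a k < a (Suc k)) \<and>
          (\<forall>k<n. \<forall>r\<in>{a k..<a (Suc k)}. f r = f (a k))) \<longleftrightarrow> (\<exists>S. stp S f)"
    using part_to_stp stp_to_part by blast
  then show ?thesis unfolding gbullet_def by simp
qed

lemma gbulletI:
  "(\<And>r. r \<notin> {0..<1} \<Longrightarrow> f r = e) \<Longrightarrow> (\<And>r. r\<in>{0..<1} \<Longrightarrow> f r \<in> G) \<Longrightarrow> stp S f \<Longrightarrow> f \<in> gbullet G e"
  unfolding gbullet_iff by blast

lemma gbulletE:
  assumes "f \<in> gbullet G e"
  obtains S where "\<And>r. r \<notin> {0..<1} \<Longrightarrow> f r = e" "\<And>r. r\<in>{0..<1} \<Longrightarrow> f r \<in> G" "stp S f"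
  using assms unfolding gbullet_iff by blast

lemma stp_rep:
  assumes st: "stp S F" and r: "0 \<le> r" "r < 1"
  shows "\<exists>t \<in> insert 0 S \<inter> {0..<1}. F r = F t"
proof -
  define t where "t = Max {t \<in> insert 0 S. t \<le> r}"
  have fin: "finite {t \<in> insert 0 S. t \<le> r}" using stp_finite[OF st] by simp
  have tin: "t \<in> {t \<in> insert 0 S. t \<le> r}" unfolding t_def using fin r by (intro Max_in) auto
  have tge: "0 \<le> t" unfolding t_def using fin r by (intro Max_ge) auto
  have "F t = F r"
  proof (rule stpD[OF st tge _ r(2)])
    show "t \<le> r" using tin by simp
    fix s assume s: "s \<in> S"
    show "\<not> (t < s \<and> s \<le> r)"
      using Max_ge[OF fin, of s] s unfolding t_def[symmetric] by auto
  qed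
  then show ?thesis using tin tge r by (intro bexI[of _ t]) auto
qed

lemma stp_finite_range:
  assumes st: "stp S F" shows "finite (F ` {0..<1})"
proof -
  have "F ` {0..<1} \<subseteq> F ` (insert 0 S \<inter> {0..<1})" using stp_rep[OF st] by fastforce
  then show ?thesis using stp_finite[OF st] finite_subset by blast
qed

lemma stp_right:
  assumes st: "stp S F" and r: "0 \<le> r" "r < 1"
  shows "\<exists>\<delta>>0. r + \<delta> \<le> 1 \<and> (\<forall>y. r \<le> y \<and> y < r + \<delta> \<longrightarrow> F y = F r)"
proof -
  define D where "D = insert (1 - r) ((\<lambda>s. s - r) ` {s\<in>S. r < s})"
  have fD: "finite D" using stp_finite[OF st] unfolding D_def by simp
  define \<delta> where "\<delta> = Min D"
  have dpos: "\<delta> > 0" unfolding \<delta>_def using fD r by (subst Min_gr_iff) (auto simp: D_def)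
  have d1: "\<delta> \<le> 1 - r" unfolding \<delta>_def using fD by (intro Min_le) (auto simp: D_def)
  have ds: "\<And>s. s \<in> S \<Longrightarrow> r < s \<Longrightarrow> \<delta> \<le> s - r" unfolding \<delta>_def using fD by (intro Min_le) (auto simp: D_def)
  have "\<forall>y. r \<le> y \<and> y < r + \<delta> \<longrightarrow> F y = F r"
  proof (intro allI impI)
    fix y assume y: "r \<le> y \<and> y < r + \<delta>"
    have "F r = F y"
    proof (rule stpD[OF st r(1)])
      show "r \<le> y" "y < 1" using y d1 by auto
      fix s assume "s \<in> S" then show "\<not> (r < s \<and> s \<le> y)" using ds y by force
    qed
    then show "F y = F r" by simp
  qed
  moreover have "r + \<delta> \<le> 1" using d1 by simp
  ultimately show ?thesis using dpos by blast
qed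

lemma stp_sets:
  assumes st: "stp S F"
  shows "{r \<in> {0..<1}. P (F r)} \<in> sets lborel"
proof -
  define Op where "Op = {r. 0 < r \<and> r < 1 \<and> r \<notin> S \<and> P (F r)}"
  have fS: "finite S" using stp_finite[OF st] .
  have "open Op"
    unfolding open_dist
  proof (intro ballI)
    fix r assume rO: "r \<in> Op"
    define D where "D = insert r (insert (1 - r) ((\<lambda>s. \<bar>s - r\<bar>) ` S))"
    have fD: "finite D" using fS unfolding D_def by simp
    define \<epsilon> where "\<epsilon> = Min D"
    have epos: "\<epsilon> > 0" unfolding \<epsilon>_def using fD rO by (subst Min_gr_iff) (auto simp: D_def Op_def)
    have e1: "\<epsilon> \<le> r" "\<epsilon> \<le> 1 - r" unfolding \<epsilon>_def using fD by (auto intro!: Min_le simp: D_def simp del: Min_insert)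
    have es: "\<And>s. s \<in> S \<Longrightarrow> \<epsilon> \<le> \<bar>s - r\<bar>" unfolding \<epsilon>_def using fD by (intro Min_le) (auto simp: D_def)
    have "\<forall>y. dist y r < \<epsilon> \<longrightarrow> y \<in> Op"
    proof (intro allI impI)
      fix y assume dy: "dist y r < \<epsilon>"
      then have y01: "0 < y" "y < 1" using e1 by (auto simp: dist_real_def)
      have yS: "y \<notin> S" using es dy by (force simp: dist_real_def)
      have "F y = F r"
      proof (cases "r \<le> y")
        case True
        have "F r = F y"
        proof (rule stpD[OF st])
          show "0 \<le> r" "r \<le> y" "y < 1" using rO True y01 by (auto simp: Op_def)
          fix s assume "s \<in> S" then show "\<not> (r < s \<and> s \<le> y)" using es dy by (force simp: dist_real_def)
        qed
        then show ?thesis by simp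
      next
        case False
        show ?thesis
        proof (rule stpD[OF st])
          show "0 \<le> y" "y \<le> r" "r < 1" using rO False y01 by (auto simp: Op_def)
          fix s assume "s \<in> S" then show "\<not> (y < s \<and> s \<le> r)" using es dy by (force simp: dist_real_def)
        qed
      qed
      then show "y \<in> Op" using rO y01 yS by (auto simp: Op_def)
    qed
    then show "\<exists>e>0. \<forall>y. dist y r < e \<longrightarrow> y \<in> Op" using epos by blast
  qed
  then have m1: "Op \<in> sets lborel" by simp
  have m2: "insert 0 S \<inter> {r \<in> {0..<1}. P (F r)} \<in> sets lborel"
  proof -
    have "finite (insert 0 S \<inter> {r \<in> {0..<1}. P (F r)})" using fS by simp
    then have "closed (insert 0 S \<inter> {r \<in> {0..<1}. P (F r)})" by (rule finite_imp_closed)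
    then show ?thesis by simp
  qed
  have eq: "{r \<in> {0..<1}. P (F r)} = Op \<union> (insert 0 S \<inter> {r \<in> {0..<1}. P (F r)})"
    unfolding Op_def by (auto simp: less_le)
  show ?thesis by (subst eq) (rule sets.Un[OF m1 m2])
qed

lemma Ico_fmeas: "{0..<1::real} \<in> fmeasurable lborel"
  by (simp add: fmeasurable_def)

lemma stp_fmeas:
  assumes st: "stp S F"
  shows "{r \<in> {0..<1}. P (F r)} \<in> fmeasurable lborel"
  by (rule fmeasurableI2[OF Ico_fmeas _ stp_sets[OF st]]) auto

lemma measure_Ico01: "measure lborel {0..<1::real} = 1"
  by (simp add: measure_def)


lemma meas_mono: "A \<subseteq> B \<Longrightarrow> A \<in> sets lborel \<Longrightarrow> B \<in> fmeasurable lborel \<Longrightarrow> measure lborel A \<le> measure lborel B"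
  by (rule measure_mono_fmeasurable)

context tgg
begin

abbreviation "GB \<equiv> gbullet G e"
abbreviation "iv \<equiv> ginv G op e"
abbreviation "BT \<equiv> bullet_topology G op e T"

lemma gb_stp: assumes "f \<in> GB" obtains S where "stp S f" using assms gbulletE by metis
lemma gb_out: "f \<in> GB \<Longrightarrow> r \<notin> {0..<1} \<Longrightarrow> f r = e" using gbulletE by metis
lemma gb_in: "f \<in> GB \<Longrightarrow> r \<in> {0..<1} \<Longrightarrow> f r \<in> G" using gbulletE by metis
lemma gb_in': "f \<in> GB \<Longrightarrow> f r \<in> G"
  by (cases "r \<in> {0..<1}") (auto simp: gb_in gb_out)

lemma bop_in: assumes f: "f \<in> GB" and g: "g \<in> GB" shows "bop op f g \<in> GB"
proof -
  obtain S S' where s: "stp S f" "stp S' g" using gb_stp f g by metis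
  show ?thesis
  proof (rule gbulletI[where S="S \<union> S'"])
    fix r :: real assume "r \<notin> {0..<1}"
    then show "bop op f g r = e" using gb_out[OF f] gb_out[OF g] by (simp add: bop_def)
  next
    fix r :: real show "bop op f g r \<in> G" using gb_in'[OF f] gb_in'[OF g] by (simp add: bop_def)
  next
    show "stp (S \<union> S') (bop op f g)" unfolding bop_def by (rule stp_comb[OF s])
  qed
qed

definition ldiv :: "(real \<Rightarrow> 'a) \<Rightarrow> (real \<Rightarrow> 'a) \<Rightarrow> (real \<Rightarrow> 'a)" where
  "ldiv f g = (\<lambda>r. op (iv (f r)) (g r))"

lemma ldiv_in: assumes f: "f \<in> GB" and g: "g \<in> GB" shows "ldiv f g \<in> GB"
proof -
  obtain S S' where s: "stp S f" "stp S' g" using gb_stp f g by metis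
  show ?thesis
  proof (rule gbulletI[where S="S \<union> S'"])
    fix r :: real assume "r \<notin> {0..<1}"
    then show "ldiv f g r = e" using gb_out[OF f] gb_out[OF g] by (simp add: ldiv_def)
  next
    fix r :: real show "ldiv f g r \<in> G" using gb_in'[OF f] gb_in'[OF g] by (simp add: ldiv_def)
  next
    show "stp (S \<union> S') (ldiv f g)" unfolding ldiv_def by (rule stp_comb[OF s])
  qed
qed

lemma bop_ldiv: assumes f: "f \<in> GB" and g: "g \<in> GB" shows "bop op f (ldiv f g) = g"
  using f g gb_in' by (auto simp: bop_def ldiv_def)

lemma ldiv_bop: assumes f: "f \<in> GB" and g: "g \<in> GB" shows "ldiv f (bop op f g) = g"
  using f g gb_in' by (auto simp: bop_def ldiv_def)

lemma zero_gb: "(\<lambda>r. e) \<in> GB"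
  by (rule gbulletI[where S="{}"]) (auto simp: stp_def)

lemma bop_zero: "h \<in> GB \<Longrightarrow> bop op (\<lambda>r. e) h = h"
  using gb_in' by (auto simp: bop_def)

lemma gb_fmeas: "f \<in> GB \<Longrightarrow> {r \<in> {0..<1}. P (f r)} \<in> fmeasurable lborel"
  using gb_stp stp_fmeas by metis

lemma gb_sets: "f \<in> GB \<Longrightarrow> {r \<in> {0..<1}. P (f r)} \<in> sets lborel"
  using gb_fmeas fmeasurableD by blast

lemma Ob_mono:
  assumes "V' \<subseteq> V" "\<epsilon>' \<le> \<epsilon>" shows "Obullet G e V' \<epsilon>' \<subseteq> Obullet G e V \<epsilon>"
proof
  fix h assume h: "h \<in> Obullet G e V' \<epsilon>'"
  then have hg: "h \<in> GB" by (simp add: Obullet_def)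
  have "measure lborel {r \<in> {0..<1}. h r \<notin> V} \<le> measure lborel {r \<in> {0..<1}. h r \<notin> V'}"
    using assms by (intro meas_mono gb_sets gb_fmeas hg) auto
  then show "h \<in> Obullet G e V \<epsilon>" using h assms by (simp add: Obullet_def)
qed

definition bpred where
  "bpred U \<longleftrightarrow> U \<subseteq> GB \<and> (\<forall>f\<in>U. \<exists>V \<epsilon>. openin T V \<and> e \<in> V \<and> \<epsilon> > 0 \<and> bop op f ` Obullet G e V \<epsilon> \<subseteq> U)"

lemma istop: "istopology bpred"
  unfolding istopology_def
proof (intro conjI allI impI)
  fix U U' assume U: "bpred U" and U': "bpred U'"
  show "bpred (U \<inter> U')" unfolding bpred_def
  proof (intro conjI ballI)
    show "U \<inter> U' \<subseteq> GB" using U by (auto simp: bpred_def)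
    fix f assume f: "f \<in> U \<inter> U'"
    obtain V \<epsilon> where v: "openin T V" "e \<in> V" "\<epsilon> > 0" "bop op f ` Obullet G e V \<epsilon> \<subseteq> U"
      using U f unfolding bpred_def by blast
    obtain V' \<epsilon>' where v': "openin T V'" "e \<in> V'" "\<epsilon>' > 0" "bop op f ` Obullet G e V' \<epsilon>' \<subseteq> U'"
      using U' f unfolding bpred_def by blast
    have "Obullet G e (V \<inter> V') (min \<epsilon> \<epsilon>') \<subseteq> Obullet G e V \<epsilon>"
         "Obullet G e (V \<inter> V') (min \<epsilon> \<epsilon>') \<subseteq> Obullet G e V' \<epsilon>'" by (rule Ob_mono; simp)+
    then have "bop op f ` Obullet G e (V \<inter> V') (min \<epsilon> \<epsilon>') \<subseteq> U \<inter> U'" using v v' by blast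
    then show "\<exists>V \<epsilon>. openin T V \<and> e \<in> V \<and> 0 < \<epsilon> \<and> bop op f ` Obullet G e V \<epsilon> \<subseteq> U \<inter> U'"
      using v v' by (intro exI[of _ "V \<inter> V'"] exI[of _ "min \<epsilon> \<epsilon>'"]) auto
  qed
next
  fix KK assume KK: "\<forall>K\<in>KK. bpred K"
  show "bpred (\<Union> KK)" unfolding bpred_def
  proof (intro conjI ballI)
    show "\<Union> KK \<subseteq> GB" using KK by (auto simp: bpred_def)
    fix f assume "f \<in> \<Union> KK"
    then obtain K where K: "K \<in> KK" "f \<in> K" by blast
    have "bpred K" using KK K by blast
    then obtain V \<epsilon> where v: "openin T V" "e \<in> V" "\<epsilon> > 0" "bop op f ` Obullet G e V \<epsilon> \<subseteq> K"
      using K(2) unfolding bpred_def by blast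
    then show "\<exists>V \<epsilon>. openin T V \<and> e \<in> V \<and> 0 < \<epsilon> \<and> bop op f ` Obullet G e V \<epsilon> \<subseteq> \<Union> KK"
      using K by blast
  qed
qed

lemma openin_BT: "openin BT U \<longleftrightarrow> bpred U"
  unfolding bullet_topology_def bpred_def[symmetric] using istop by simp

lemma openin_BT': "openin BT U \<longleftrightarrow> U \<subseteq> GB \<and> (\<forall>f\<in>U. \<exists>V \<epsilon>. openin T V \<and> e \<in> V \<and> \<epsilon> > 0 \<and> bop op f ` Obullet G e V \<epsilon> \<subseteq> U)"
  unfolding openin_BT bpred_def ..

lemma open_GB: "openin BT GB"
  unfolding openin_BT'
proof (intro conjI ballI)
  fix f assume f: "f \<in> GB"
  have "bop op f ` Obullet G e G 1 \<subseteq> GB" using bop_in f by (auto simp: Obullet_def)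
  moreover have "openin T G" using top_G by (metis openin_topspace)
  ultimately show "\<exists>V \<epsilon>. openin T V \<and> e \<in> V \<and> 0 < \<epsilon> \<and> bop op f ` Obullet G e V \<epsilon> \<subseteq> GB"
    by (intro exI[of _ G] exI[of _ 1]) auto
qed auto

lemma topspace_BT: "topspace BT = GB"
proof
  show "topspace BT \<subseteq> GB" using openin_topspace[of BT] unfolding openin_BT' by blast
  show "GB \<subseteq> topspace BT" using open_GB by (rule openin_subset)
qed

lemma in_Ob_iff: "h \<in> Obullet G e V \<epsilon> \<longleftrightarrow> h \<in> GB \<and> measure lborel {r \<in> {0..<1}. h r \<notin> V} < \<epsilon>"
  by (simp add: Obullet_def)

lemma in_translate:
  assumes f: "f \<in> GB" and g: "g \<in> GB" and m: "measure lborel {r \<in> {0..<1}. op (iv (f r)) (g r) \<notin> V} < \<epsilon>"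
  shows "g \<in> bop op f ` Obullet G e V \<epsilon>"
proof -
  have "ldiv f g \<in> Obullet G e V \<epsilon>" using m ldiv_in[OF f g] by (simp add: in_Ob_iff ldiv_def)
  then show ?thesis using bop_ldiv[OF f g] by (metis image_eqI)
qed

lemma interior_zero:
  assumes "(\<lambda>r. e) \<in> BT interior_of U"
  shows "\<exists>V \<epsilon>. openin T V \<and> e \<in> V \<and> \<epsilon> > 0 \<and> Obullet G e V \<epsilon> \<subseteq> U"
proof -
  obtain W where W: "openin BT W" "(\<lambda>r. e) \<in> W" "W \<subseteq> U" using assms by (auto simp: interior_of_def)
  then obtain V \<epsilon> where v: "openin T V" "e \<in> V" "\<epsilon> > 0" "bop op (\<lambda>r. e) ` Obullet G e V \<epsilon> \<subseteq> W"
    unfolding openin_BT' by blast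
  have "Obullet G e V \<epsilon> \<subseteq> W"
  proof
    fix h assume "h \<in> Obullet G e V \<epsilon>"
    then show "h \<in> W" using v(4) bop_zero[of h] by (force simp: in_Ob_iff)
  qed
  then show ?thesis using v W by blast
qed

end


context includes cardinal_syntax begin

lemma lepoll_iff_ord: "A \<lesssim> B \<longleftrightarrow> |A| \<le>o |B|"
  unfolding lepoll_def card_of_ordLeq[symmetric] by blast

lemma sq_lepoll: assumes K: "infinite K" shows "K \<times> K \<lesssim> K"
proof -
  have "K \<noteq> {}" using K by auto
  then have "|K \<times> K| =o |K|" using card_of_Times_infinite[of K K] K ordLeq_refl[OF card_of_Card_order] by blast
  then show ?thesis unfolding lepoll_iff_ord using ordIso_iff_ordLeq by blast
qed

lemma times_lepoll_inf: assumes K: "infinite K" and A: "A \<lesssim> K" and B: "B \<lesssim> K" shows "A \<times> B \<lesssim> K"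
  using times_lepoll_mono[OF A B] sq_lepoll[OF K] lepoll_trans by blast

lemma nat_lepoll_inf: "infinite K \<Longrightarrow> (UNIV::nat set) \<lesssim> K"
  using infinite_le_lepoll by blast

lemma lists_lepoll_inf:
  assumes K: "infinite K" and X: "X \<lesssim> K"
  shows "lists X \<lesssim> K"
proof -
  have lev: "{xs \<in> lists X. length xs = n} \<lesssim> K" for n
  proof (induction n)
    case 0
    have "{xs \<in> lists X. length xs = 0} = {[]}" by auto
    moreover have "{[]} \<lesssim> K" using K by (meson finite.emptyI finite_insert finite_lepoll_infinite)
    ultimately show ?case by simp
  next
    case (Suc n)
    have "{xs \<in> lists X. length xs = Suc n} = (\<lambda>(x,xs). x # xs) ` (X \<times> {xs \<in> lists X. length xs = n})"
      by (auto simp: length_Suc_conv image_def)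
    moreover have "(\<lambda>(x,xs). x # xs) ` (X \<times> {xs \<in> lists X. length xs = n}) \<lesssim> K"
      using image_lepoll times_lepoll_inf[OF K X Suc.IH] lepoll_trans by blast
    ultimately show ?case by simp
  qed
  have eq: "lists X = (\<Union>n\<in>(UNIV::nat set). {xs \<in> lists X. length xs = n})" by auto
  have "|\<Union>n\<in>(UNIV::nat set). {xs \<in> lists X. length xs = n}| \<le>o |K|"
    using card_of_UNION_ordLeq_infinite[of K "UNIV::nat set" "\<lambda>n. {xs \<in> lists X. length xs = n}"] K
      nat_lepoll_inf[OF K] lev unfolding lepoll_iff_ord by blast
  then show ?thesis using eq lepoll_iff_ord by metis
qed

end


definition gridf :: "'b list \<Rightarrow> 'b \<Rightarrow> real \<Rightarrow> 'b" where
  "gridf L d r = (if 0 \<le> r \<and> r < 1 then L ! nat \<lfloor>real (length L) * r\<rfloor> else d)"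

lemma floor_idx:
  assumes N: "N > 0" and r: "0 \<le> r" "r < 1"
  shows "nat \<lfloor>real N * r\<rfloor> < N" "real (nat \<lfloor>real N * r\<rfloor>) = of_int \<lfloor>real N * r\<rfloor>"
proof -
  have "real N * r < real N" using N r by simp
  then have "\<lfloor>real N * r\<rfloor> < int N" by (simp add: floor_less_iff)
  moreover have "0 \<le> \<lfloor>real N * r\<rfloor>" using r by simp
  ultimately show "nat \<lfloor>real N * r\<rfloor> < N" by (simp add: nat_less_iff)
  show "real (nat \<lfloor>real N * r\<rfloor>) = of_int \<lfloor>real N * r\<rfloor>" using r by simp
qed

lemma gridf_in:
  assumes "set L \<subseteq> X" "L \<noteq> []" "0 \<le> r" "r < 1"
  shows "gridf L d r \<in> X"
  using assms floor_idx[of "length L" r] by (auto simp: gridf_def)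

lemma gridf_map:
  assumes "N > 0" "0 \<le> r" "r < 1"
  shows "gridf (map \<phi> [0..<N]) d r = \<phi> (nat \<lfloor>real N * r\<rfloor>)"
  using assms floor_idx[of N r] by (simp add: gridf_def)

lemma gridf_stp:
  assumes L: "L \<noteq> []"
  shows "stp ((\<lambda>k. real k / real (length L)) ` {..length L}) (gridf L d)"
  unfolding stp_def
proof (intro conjI allI impI)
  define N where "N = length L"
  have N: "N > 0" using L by (simp add: N_def)
  show "finite ((\<lambda>k. real k / real (length L)) ` {..length L})" by simp
  fix x y assume x0: "0 \<le> x" and xy: "x \<le> y" and y1: "y < 1"
    and ns: "\<forall>s\<in>(\<lambda>k. real k / real (length L)) ` {..length L}. \<not> (x < s \<and> s \<le> y)"
  define m where "m = nat \<lfloor>real N * y\<rfloor>"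
  have mN: "m < N" using floor_idx[OF N _ y1] x0 xy unfolding m_def by simp
  have my: "real m / N \<le> y" using x0 xy N unfolding m_def
    by (simp add: divide_le_eq mult.commute)
  have "\<not> (x < real m / N)" using ns mN my unfolding N_def by auto
  then have "real m / N \<le> x" by simp
  then have "real m \<le> N * x" using N by (simp add: divide_le_eq mult.commute)
  then have "\<lfloor>real N * x\<rfloor> \<ge> int m" by (metis floor_mono floor_of_nat)
  moreover have "\<lfloor>real N * x\<rfloor> \<le> \<lfloor>real N * y\<rfloor>" using xy N by (intro floor_mono) simp
  ultimately have "\<lfloor>real N * x\<rfloor> = \<lfloor>real N * y\<rfloor>" unfolding m_def using x0 xy by linarith
  then show "gridf L d x = gridf L d y" using x0 xy y1 by (simp add: gridf_def N_def)
qed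

lemma meas_Ico: "a \<le> b \<Longrightarrow> measure lborel {a..<b::real} = b - a"
  by (simp add: measure_def)

lemma fmeas_Ico: "{a..<b::real} \<in> fmeasurable lborel"
  by (cases "a \<le> b") (auto simp: fmeasurable_def)

definition cbad :: "real set \<Rightarrow> nat \<Rightarrow> nat \<Rightarrow> bool" where
  "cbad S N k \<longleftrightarrow> (\<exists>s\<in>S. real k / N < s \<and> s < (real k + 1) / N)"

lemma cell_bound:
  assumes st: "stp S f" and N: "N > 0"
  shows "\<exists>B. B \<in> fmeasurable lborel \<and> measure lborel B \<le> real (card S) / N \<and>
     (\<forall>r\<in>{0..<1}. cbad S N (nat \<lfloor>real N * r\<rfloor>) \<longrightarrow> r \<in> B) \<and>
     (\<forall>r\<in>{0..<1}. \<not> cbad S N (nat \<lfloor>real N * r\<rfloor>) \<longrightarrow> f r = f (real (nat \<lfloor>real N * r\<rfloor>) / N))"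
proof -
  have fS: "finite S" using stp_finite[OF st] .
  define I where "I s = {of_int \<lfloor>real N * s\<rfloor> / real N ..< (of_int \<lfloor>real N * s\<rfloor> + 1) / real N}" for s
  define B where "B = (\<Union>s\<in>S. I s)"
  have Bf: "B \<in> fmeasurable lborel" unfolding B_def I_def using fS by (intro fmeasurable.finite_UN fmeas_Ico) auto
  have "measure lborel B \<le> (\<Sum>s\<in>S. measure lborel (I s))"
    unfolding B_def using fS by (intro measure_UNION_le) (auto simp: I_def)
  also have "\<dots> = (\<Sum>s\<in>S. 1 / real N)"
  proof (rule sum.cong)
    fix s assume "s \<in> S"
    have "of_int \<lfloor>real N * s\<rfloor> / real N \<le> (of_int \<lfloor>real N * s\<rfloor> + 1) / real N"
      using N by (simp add: divide_right_mono)
    then show "measure lborel (I s) = 1 / real N" unfolding I_def using N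
      by (simp add: meas_Ico diff_divide_distrib[symmetric])
  qed simp
  also have "\<dots> = real (card S) / N" by simp
  finally have mB: "measure lborel B \<le> real (card S) / N" .
  have c1: "r \<in> B" if r: "r \<in> {0..<1}" and cb: "cbad S N (nat \<lfloor>real N * r\<rfloor>)" for r
  proof -
    define k where "k = nat \<lfloor>real N * r\<rfloor>"
    have kr: "real k = of_int \<lfloor>real N * r\<rfloor>" using r floor_idx[OF N] unfolding k_def by auto
    obtain s where s: "s \<in> S" "real k / N < s" "s < (real k + 1) / N" using cb unfolding cbad_def k_def by blast
    have "real k < N * s" "N * s < real k + 1" using s N by (auto simp: field_simps)
    then have fs: "\<lfloor>real N * s\<rfloor> = \<lfloor>real N * r\<rfloor>" unfolding floor_eq_iff using kr by linarith
    have "real k \<le> N * r" "N * r < real k + 1"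
      using kr of_int_floor_le[of "real N * r"] real_of_int_floor_add_one_gt[of "real N * r"] by linarith+
    then have "r \<in> I s" unfolding I_def fs kr[symmetric] using N by (auto simp: field_simps)
    then show ?thesis using s unfolding B_def by blast
  qed
  have c2: "f r = f (real (nat \<lfloor>real N * r\<rfloor>) / N)" if r: "r \<in> {0..<1}" and cb: "\<not> cbad S N (nat \<lfloor>real N * r\<rfloor>)" for r
  proof -
    define k where "k = nat \<lfloor>real N * r\<rfloor>"
    have kr: "real k = of_int \<lfloor>real N * r\<rfloor>" using r floor_idx[OF N] unfolding k_def by auto
    have a: "real k \<le> N * r" "N * r < real k + 1"
      using kr of_int_floor_le[of "real N * r"] real_of_int_floor_add_one_gt[of "real N * r"] by linarith+
    have "f (real k / N) = f r"
    proof (rule stpD[OF st])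
      show "0 \<le> real k / N" by simp
      show "real k / N \<le> r" using a N by (simp add: divide_le_eq mult.commute)
      show "r < 1" using r by simp
      fix s assume s: "s \<in> S"
      show "\<not> (real k / N < s \<and> s \<le> r)"
      proof
        assume h: "real k / N < s \<and> s \<le> r"
        have "r < (real k + 1) / N" using a N by (simp add: field_simps)
        then have "cbad S N k" using h s unfolding cbad_def by force
        then show False using cb unfolding k_def by simp
      qed
    qed
    then show ?thesis unfolding k_def by simp
  qed
  show ?thesis using Bf mB c1 c2 by blast
qed


lemma choose_N: assumes "(\<epsilon>::real) > 0" shows "\<exists>N::nat. N > 0 \<and> c / real N < \<epsilon>"
proof -
  obtain N :: nat where N: "real N > c / \<epsilon>" using reals_Archimedean2 by blast
  define M where "M = Suc N"
  have "c / \<epsilon> < real M" using N unfolding M_def by simp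
  then have "c < \<epsilon> * real M" using assms by (simp add: divide_less_eq mult.commute)
  then have "c / real M < \<epsilon>" by (simp add: divide_less_eq M_def mult.commute)
  then show ?thesis unfolding M_def by blast
qed

context tgg
begin

lemma approx_main:
  assumes f: "f \<in> GB" and \<epsilon>: "\<epsilon> > 0"
    and good: "\<And>N k r. N > 0 \<Longrightarrow> r \<in> {0..<1} \<Longrightarrow> k = nat \<lfloor>real N * r\<rfloor> \<Longrightarrow> f r = f (real k / N) \<Longrightarrow> P N k r"
  obtains N S B where "N > 0" "stp S f" "B \<in> fmeasurable lborel" "measure lborel B < \<epsilon>"
     "\<And>r. r \<in> {0..<1} \<Longrightarrow> r \<notin> B \<Longrightarrow> P N (nat \<lfloor>real N * r\<rfloor>) r"
     "\<And>r. r \<in> {0..<1} \<Longrightarrow> cbad S N (nat \<lfloor>real N * r\<rfloor>) \<Longrightarrow> r \<in> B"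
proof -
  obtain S where st: "stp S f" using gb_stp f by metis
  obtain N :: nat where N: "N > 0" "real (card S) / N < \<epsilon>" using choose_N[OF \<epsilon>] by blast
  obtain B where B: "B \<in> fmeasurable lborel" "measure lborel B \<le> real (card S) / N"
     "\<forall>r\<in>{0..<1}. cbad S N (nat \<lfloor>real N * r\<rfloor>) \<longrightarrow> r \<in> B"
     "\<forall>r\<in>{0..<1}. \<not> cbad S N (nat \<lfloor>real N * r\<rfloor>) \<longrightarrow> f r = f (real (nat \<lfloor>real N * r\<rfloor>) / N)"
    using cell_bound[OF st N(1)] by blast
  show ?thesis
  proof (rule that[OF N(1) st B(1)])
    show "measure lborel B < \<epsilon>" using B(2) N(2) by simp
    fix r :: real assume r: "r \<in> {0..<1}"
    { assume "r \<notin> B"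
      then show "P N (nat \<lfloor>real N * r\<rfloor>) r" using B(3,4) r good[OF N(1) r refl] by blast }
    { assume "cbad S N (nat \<lfloor>real N * r\<rfloor>)" then show "r \<in> B" using B(3) r by blast }
  qed
qed

lemma meas_lt: assumes "A \<in> sets lborel" "A \<subseteq> B" "B \<in> fmeasurable lborel" "measure lborel B < \<epsilon>"
  shows "measure lborel A < \<epsilon>"
  using meas_mono[OF assms(2,1,3)] assms(4) by linarith

lemma gridf_gb: assumes "set L \<subseteq> G" "L \<noteq> []" shows "gridf L e \<in> GB"
  by (rule gbulletI[OF _ _ gridf_stp[OF assms(2)]]) (use assms gridf_in in \<open>auto simp: gridf_def\<close>)

lemma dense_part:
  assumes K: "infinite K" and D: "has_dense_card T K"
  shows "has_dense_card BT K"
proof -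
  obtain D0 where D0: "D0 \<subseteq> G" "D0 \<lesssim> K" "T closure_of D0 = G" using D top_G by (auto simp: has_dense_card_def)
  define D where "D = (\<lambda>L. gridf L e) ` {L \<in> lists D0. L \<noteq> []}"
  have DG: "D \<subseteq> GB" unfolding D_def using D0(1) gridf_gb by auto
  have DK: "D \<lesssim> K"
  proof -
    have "D \<lesssim> {L \<in> lists D0. L \<noteq> []}" unfolding D_def by (rule image_lepoll)
    also have "{L \<in> lists D0. L \<noteq> []} \<lesssim> lists D0" by (rule subset_imp_lepoll) auto
    also have "lists D0 \<lesssim> K" using lists_lepoll_inf[OF K D0(2)] .
    finally show ?thesis .
  qed
  have "GB \<subseteq> BT closure_of D"
  proof
    fix f assume f: "f \<in> GB"
    show "f \<in> BT closure_of D" unfolding in_closure_of topspace_BT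
    proof (intro conjI allI impI f)
      fix U assume U: "f \<in> U \<and> openin BT U"
      then obtain V \<epsilon> where v: "openin T V" "e \<in> V" "\<epsilon> > 0" "bop op f ` Obullet G e V \<epsilon> \<subseteq> U"
        unfolding openin_BT' by blast
      have ex: "\<exists>d. d \<in> D0 \<and> op (iv c) d \<in> V" if c: "c \<in> G" for c
      proof -
        obtain W where W: "openin T W" "c \<in> W" "\<forall>y\<in>W. op (iv c) y \<in> V"
          using nbhd_lmul[of "iv c" V c] c v by auto
        have "c \<in> T closure_of D0" using D0(3) c by simp
        then obtain d where "d \<in> D0" "d \<in> W" using W unfolding in_closure_of by blast
        then show ?thesis using W by blast
      qed
      define \<sigma> where "\<sigma> c = (SOME d. d \<in> D0 \<and> op (iv c) d \<in> V)" for c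
      have \<sigma>: "\<sigma> c \<in> D0 \<and> op (iv c) (\<sigma> c) \<in> V" if "c \<in> G" for c
        unfolding \<sigma>_def using someI_ex[OF ex[OF that]] .
      obtain N S B where NB: "N > 0" "B \<in> fmeasurable lborel" "measure lborel B < \<epsilon>"
         "\<And>r. r \<in> {0..<1} \<Longrightarrow> r \<notin> B \<Longrightarrow> op (iv (f r)) (gridf (map (\<lambda>k. \<sigma> (f (real k / N))) [0..<N]) e r) \<in> V"
      proof (rule approx_main[OF f v(3)])
        fix N k r assume N: "(N::nat) > 0" and r: "r \<in> {0..<1}" and k: "k = nat \<lfloor>real N * r\<rfloor>" and fr: "f r = f (real k / N)"
        show "op (iv (f r)) (gridf (map (\<lambda>k. \<sigma> (f (real k / N))) [0..<N]) e r) \<in> V"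
        proof -
          have g: "gridf (map (\<lambda>k. \<sigma> (f (real k / N))) [0..<N]) e r = \<sigma> (f (real k / N))"
            using r unfolding k by (intro gridf_map[OF N]) auto
          show ?thesis unfolding g fr using \<sigma>[of "f (real k / N)"] gb_in'[OF f] by simp
        qed
      qed blast
      define g where "g = gridf (map (\<lambda>k. \<sigma> (f (real k / N))) [0..<N]) e"
      have gD: "g \<in> D" unfolding D_def g_def using NB(1) \<sigma> gb_in'[OF f] by (auto intro!: imageI)
      then have gG: "g \<in> GB" using DG by blast
      have ms: "{r \<in> {0..<1}. op (iv (f r)) (g r) \<notin> V} \<in> sets lborel"
        using gb_sets[OF ldiv_in[OF f gG], of "\<lambda>x. x \<notin> V"] by (simp add: ldiv_def)
      have "measure lborel {r \<in> {0..<1}. op (iv (f r)) (g r) \<notin> V} < \<epsilon>"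
        by (rule meas_lt[OF ms _ NB(2,3)]) (use NB(4) g_def in blast)
      then have "g \<in> U" using in_translate[OF f gG] v(4) by blast
      then show "\<exists>y. y \<in> D \<and> y \<in> U" using gD by blast
    qed
  qed
  then have "BT closure_of D = GB" using closure_of_subset_topspace[of BT D] topspace_BT by blast
  then show ?thesis unfolding has_dense_card_def topspace_BT using DG DK by blast
qed

end


lemma insert_lepoll_inf: assumes K: "infinite K" and A: "A \<lesssim> K" shows "insert a A \<lesssim> K"
proof (cases "finite A")
  case True then show ?thesis using K finite_lepoll_infinite by blast
next
  case False
  then have "insert a A \<approx> A" by (rule infinite_insert_eqpoll)
  then show ?thesis using A lepoll_trans1 by blast
qed

context tgg
begin

lemma Ob_open:
  assumes B: "openin T B" and \<epsilon>: "\<epsilon> > 0"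
  shows "openin BT (Obullet G e B \<epsilon>)"
  unfolding openin_BT'
proof (intro conjI ballI)
  show "Obullet G e B \<epsilon> \<subseteq> GB" by (auto simp: in_Ob_iff)
  fix g assume gO: "g \<in> Obullet G e B \<epsilon>"
  then have g: "g \<in> GB" and mg: "measure lborel {r \<in> {0..<1}. g r \<notin> B} < \<epsilon>" by (auto simp: in_Ob_iff)
  define \<delta> where "\<delta> = \<epsilon> - measure lborel {r \<in> {0..<1}. g r \<notin> B}"
  have dpos: "\<delta> > 0" using mg unfolding \<delta>_def by simp
  define C where "C = g ` {0..<1} \<inter> B"
  have fC: "finite C" unfolding C_def using gb_stp[OF g] stp_finite_range by blast
  have CG: "C \<subseteq> G" unfolding C_def using gb_in'[OF g] by auto
  have exW: "\<exists>W. openin T W \<and> e \<in> W \<and> (\<forall>y\<in>W. op c y \<in> B)" if c: "c \<in> C" for c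
    using nbhd_lmul[of c B e] c CG B unfolding C_def by auto
  define W where "W c = (SOME W. openin T W \<and> e \<in> W \<and> (\<forall>y\<in>W. op c y \<in> B))" for c
  have W: "openin T (W c) \<and> e \<in> W c \<and> (\<forall>y\<in>W c. op c y \<in> B)" if "c \<in> C" for c
    unfolding W_def using someI_ex[OF exW[OF that]] .
  define V where "V = (\<Inter>c\<in>C. W c) \<inter> topspace T"
  have Vo: "openin T V" unfolding V_def using fC W by (intro openin_INT) auto
  have eV: "e \<in> V" unfolding V_def using W top_G by auto
  have "bop op g ` Obullet G e V \<delta> \<subseteq> Obullet G e B \<epsilon>"
  proof
    fix x assume "x \<in> bop op g ` Obullet G e V \<delta>"
    then obtain h where h: "h \<in> Obullet G e V \<delta>" and x: "x = bop op g h" by blast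
    have hg: "h \<in> GB" and mh: "measure lborel {r \<in> {0..<1}. h r \<notin> V} < \<delta>" using h by (auto simp: in_Ob_iff)
    have xg: "x \<in> GB" unfolding x using bop_in[OF g hg] .
    have sub: "{r \<in> {0..<1}. x r \<notin> B} \<subseteq> {r \<in> {0..<1}. g r \<notin> B} \<union> {r \<in> {0..<1}. h r \<notin> V}"
    proof
      fix r assume r: "r \<in> {r \<in> {0..<1}. x r \<notin> B}"
      show "r \<in> {r \<in> {0..<1}. g r \<notin> B} \<union> {r \<in> {0..<1}. h r \<notin> V}"
      proof (rule ccontr)
        assume "r \<notin> {r \<in> {0..<1}. g r \<notin> B} \<union> {r \<in> {0..<1}. h r \<notin> V}"
        then have gb: "g r \<in> B" and hv: "h r \<in> V" using r by auto
        have "g r \<in> C" unfolding C_def using gb r by auto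
        then have "h r \<in> W (g r)" "op (g r) (h r) \<in> B" using hv W unfolding V_def by auto
        then show False using r x by (simp add: bop_def)
      qed
    qed
    have "measure lborel {r \<in> {0..<1}. x r \<notin> B} \<le> measure lborel ({r \<in> {0..<1}. g r \<notin> B} \<union> {r \<in> {0..<1}. h r \<notin> V})"
      by (rule meas_mono[OF sub gb_sets[OF xg]]) (intro fmeasurable.Un gb_fmeas g hg)
    also have "\<dots> \<le> measure lborel {r \<in> {0..<1}. g r \<notin> B} + measure lborel {r \<in> {0..<1}. h r \<notin> V}"
      by (intro measure_Un_le gb_sets g hg)
    also have "\<dots> < \<epsilon>" using mh unfolding \<delta>_def by simp
    finally show "x \<in> Obullet G e B \<epsilon>" using xg by (simp add: in_Ob_iff)
  qed
  then show "\<exists>V \<epsilon>'. openin T V \<and> e \<in> V \<and> \<epsilon>' > 0 \<and> bop op g ` Obullet G e V \<epsilon>' \<subseteq> Obullet G e B \<epsilon>"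
    using Vo eV dpos by blast
qed

lemma zero_in_Ob: "\<epsilon> > 0 \<Longrightarrow> e \<in> B \<Longrightarrow> (\<lambda>r. e) \<in> Obullet G e B \<epsilon>"
  using zero_gb by (simp add: in_Ob_iff)

lemma base_part:
  assumes K: "infinite K" and LB: "has_local_base_card T e K"
  shows "has_local_base_card BT (\<lambda>r. e) K"
proof -
  obtain \<B> where B: "\<B> \<lesssim> K" "\<forall>B\<in>\<B>. openin T B \<and> e \<in> B"
      "\<forall>U. openin T U \<and> e \<in> U \<longrightarrow> (\<exists>B\<in>\<B>. B \<subseteq> U)"
    using LB unfolding has_local_base_card_def by blast
  define \<N> where "\<N> = (\<lambda>(B, n::nat). Obullet G e B (1 / Suc n)) ` (\<B> \<times> UNIV)"
  have NK: "\<N> \<lesssim> K"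
  proof -
    have "\<N> \<lesssim> \<B> \<times> (UNIV::nat set)" unfolding \<N>_def by (rule image_lepoll)
    also have "\<B> \<times> (UNIV::nat set) \<lesssim> K" using times_lepoll_inf[OF K B(1) nat_lepoll_inf[OF K]] .
    finally show ?thesis .
  qed
  have N1: "\<forall>N\<in>\<N>. openin BT N \<and> (\<lambda>r. e) \<in> N"
    unfolding \<N>_def using B(2) Ob_open zero_in_Ob by auto
  have N2: "\<exists>N\<in>\<N>. N \<subseteq> U" if U: "openin BT U" "(\<lambda>r. e) \<in> U" for U
  proof -
    have "(\<lambda>r. e) \<in> BT interior_of U" using U by (simp add: interior_of_openin)
    then obtain V \<epsilon> where v: "openin T V" "e \<in> V" "\<epsilon> > 0" "Obullet G e V \<epsilon> \<subseteq> U"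
      using interior_zero by blast
    obtain B0 where B0: "B0 \<in> \<B>" "B0 \<subseteq> V" using B(3) v by blast
    obtain n :: nat where n: "1 / Suc n < \<epsilon>" using v(3) nat_approx_posE by blast
    have "Obullet G e B0 (1 / Suc n) \<subseteq> Obullet G e V \<epsilon>" using B0 n by (intro Ob_mono) auto
    moreover have "Obullet G e B0 (1 / Suc n) \<in> \<N>" unfolding \<N>_def using B0 by force
    ultimately show ?thesis using v by blast
  qed
  show ?thesis unfolding has_local_base_card_def using NK N1 N2 by blast
qed

end


lemma stp_cong: "stp S F \<Longrightarrow> (\<And>r. r \<in> {0..<1} \<Longrightarrow> H r = F r) \<Longrightarrow> stp S H"
  unfolding stp_def
proof (intro conjI allI impI)
  assume a: "finite S \<and> (\<forall>x y. 0 \<le> x \<longrightarrow> x \<le> y \<longrightarrow> y < 1 \<longrightarrow> (\<forall>s\<in>S. \<not> (x < s \<and> s \<le> y)) \<longrightarrow> F x = F y)"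
    and h: "\<And>r. r \<in> {0..<1} \<Longrightarrow> H r = F r"
  then show "finite S" by blast
  fix x y assume xy: "0 \<le> x" "x \<le> y" "y < 1" "\<forall>s\<in>S. \<not> (x < s \<and> s \<le> y)"
  then have "F x = F y" using a by blast
  moreover have "H x = F x" "H y = F y" using h xy by auto
  ultimately show "H x = H y" by simp
qed

context tgg
begin

lemma gridf_sets:
  assumes f: "f \<in> GB" and L: "L \<noteq> []"
  shows "{r \<in> {0..<1}. f r \<notin> gridf L d r} \<in> sets lborel"
proof -
  obtain S where st: "stp S f" using gb_stp f by metis
  from stp_sets[OF stp_comb[OF st gridf_stp[OF L], of Pair], of "\<lambda>(a, b). a \<notin> b"] show ?thesis by simp
qed

lemma network_part:
  assumes K: "infinite K" and NW: "has_network_card T K"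
  shows "has_network_card BT K"
proof -
  obtain \<P> where P: "\<P> \<lesssim> K" "is_network T \<P>" using NW unfolding has_network_card_def by blast
  have Psub: "\<forall>P\<in>\<P>. P \<subseteq> G" and Pnet: "\<forall>x U. openin T U \<and> x \<in> U \<longrightarrow> (\<exists>P\<in>\<P>. x \<in> P \<and> P \<subseteq> U)"
    using P(2) top_G unfolding is_network_def by auto
  define NWs where "NWs L M = {g \<in> GB. measure lborel {r \<in> {0..<1}. g r \<notin> gridf L G r} < 1 / Suc M}" for L and M :: nat
  define Fam where "Fam = (\<lambda>(L, M). NWs L M) ` (lists \<P> \<times> UNIV)"
  have FK: "Fam \<lesssim> K"
  proof -
    have "Fam \<lesssim> lists \<P> \<times> (UNIV::nat set)" unfolding Fam_def by (rule image_lepoll)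
    also have "lists \<P> \<times> (UNIV::nat set) \<lesssim> K" using times_lepoll_inf[OF K lists_lepoll_inf[OF K P(1)] nat_lepoll_inf[OF K]] .
    finally show ?thesis .
  qed
  have "is_network BT Fam"
    unfolding is_network_def topspace_BT
  proof (intro conjI allI impI ballI)
    fix P assume "P \<in> Fam" then show "P \<subseteq> GB" unfolding Fam_def NWs_def by auto
  next
    fix f U assume fU: "openin BT U \<and> f \<in> U"
    then have f: "f \<in> GB" unfolding openin_BT' by blast
    obtain V \<epsilon> where v: "openin T V" "e \<in> V" "\<epsilon> > 0" "bop op f ` Obullet G e V \<epsilon> \<subseteq> U"
      using fU f unfolding openin_BT' by blast
    have exP: "\<exists>P. P \<in> \<P> \<and> c \<in> P \<and> (\<forall>y\<in>P. op (iv c) y \<in> V)" if c: "c \<in> G" for c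
    proof -
      obtain W where W: "openin T W" "c \<in> W" "\<forall>y\<in>W. op (iv c) y \<in> V"
        using nbhd_lmul[of "iv c" V c] c v by auto
      then obtain P where "P \<in> \<P>" "c \<in> P" "P \<subseteq> W" using Pnet by blast
      then show ?thesis using W by blast
    qed
    define \<sigma> where "\<sigma> c = (SOME P. P \<in> \<P> \<and> c \<in> P \<and> (\<forall>y\<in>P. op (iv c) y \<in> V))" for c
    have \<sigma>: "\<sigma> c \<in> \<P> \<and> c \<in> \<sigma> c \<and> (\<forall>y\<in>\<sigma> c. op (iv c) y \<in> V)" if "c \<in> G" for c
      unfolding \<sigma>_def using someI_ex[OF exP[OF that]] .
    obtain M :: nat where M: "1 / Suc M < \<epsilon> / 2" using v(3) nat_approx_posE[of "\<epsilon>/2"] by auto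
    obtain N S B where NB: "N > 0" "B \<in> fmeasurable lborel" "measure lborel B < 1 / Suc M"
       "\<And>r. r \<in> {0..<1} \<Longrightarrow> r \<notin> B \<Longrightarrow> f r = f (real (nat \<lfloor>real N * r\<rfloor>) / N)"
      by (rule approx_main[OF f, of "1 / Suc M" "\<lambda>N k r. f r = f (real k / N)"]) auto
    define L where "L = map (\<lambda>k. \<sigma> (f (real k / N))) [0..<N]"
    have LnE: "L \<noteq> []" using NB(1) unfolding L_def by simp
    have LP: "L \<in> lists \<P>" unfolding L_def using \<sigma> gb_in'[OF f] by auto
    have gl: "gridf L G r = \<sigma> (f r)" if r: "r \<in> {0..<1}" "r \<notin> B" for r
    proof -
      have "gridf L G r = \<sigma> (f (real (nat \<lfloor>real N * r\<rfloor>) / N))"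
        unfolding L_def using r by (intro gridf_map[OF NB(1)]) auto
      then show ?thesis using NB(4)[OF r] by simp
    qed
    have fin: "f \<in> NWs L M"
    proof -
      have "measure lborel {r \<in> {0..<1}. f r \<notin> gridf L G r} < 1 / Suc M"
      proof (rule meas_lt[OF gridf_sets[OF f LnE] _ NB(2,3)])
        show "{r \<in> {0..<1}. f r \<notin> gridf L G r} \<subseteq> B"
          using gl \<sigma> gb_in'[OF f] by blast
      qed
      then show ?thesis unfolding NWs_def using f by blast
    qed
    have "NWs L M \<subseteq> U"
    proof
      fix g assume g: "g \<in> NWs L M"
      then have gG: "g \<in> GB" and mg: "measure lborel {r \<in> {0..<1}. g r \<notin> gridf L G r} < 1 / Suc M"
        unfolding NWs_def by auto
      have ms: "{r \<in> {0..<1}. op (iv (f r)) (g r) \<notin> V} \<in> sets lborel"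
        using gb_sets[OF ldiv_in[OF f gG], of "\<lambda>x. x \<notin> V"] by (simp add: ldiv_def)
      have sub: "{r \<in> {0..<1}. op (iv (f r)) (g r) \<notin> V} \<subseteq> B \<union> {r \<in> {0..<1}. g r \<notin> gridf L G r}"
      proof
        fix r assume r: "r \<in> {r \<in> {0..<1}. op (iv (f r)) (g r) \<notin> V}"
        show "r \<in> B \<union> {r \<in> {0..<1}. g r \<notin> gridf L G r}"
        proof (rule ccontr)
          assume "r \<notin> B \<union> {r \<in> {0..<1}. g r \<notin> gridf L G r}"
          then have "r \<notin> B" "g r \<in> \<sigma> (f r)" using r gl by auto
          then show False using r \<sigma>[OF gb_in'[OF f]] by auto
        qed
      qed
      have F2: "{r \<in> {0..<1}. g r \<notin> gridf L G r} \<in> fmeasurable lborel"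
        by (rule fmeasurableI2[OF Ico_fmeas _ gridf_sets[OF gG LnE]]) auto
      have "measure lborel {r \<in> {0..<1}. op (iv (f r)) (g r) \<notin> V} \<le> measure lborel (B \<union> {r \<in> {0..<1}. g r \<notin> gridf L G r})"
        by (rule meas_mono[OF sub ms]) (intro fmeasurable.Un NB(2) F2)
      also have "\<dots> \<le> measure lborel B + measure lborel {r \<in> {0..<1}. g r \<notin> gridf L G r}"
        by (intro measure_Un_le fmeasurableD NB(2) F2)
      also have "\<dots> < \<epsilon>" using NB(3) mg M by simp
      finally have "g \<in> bop op f ` Obullet G e V \<epsilon>" by (rule in_translate[OF f gG])
      then show "g \<in> U" using v(4) by blast
    qed
    moreover have "NWs L M \<in> Fam" unfolding Fam_def using LP by force
    ultimately show "\<exists>P\<in>Fam. f \<in> P \<and> P \<subseteq> U" using fin by blast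
  qed
  then show ?thesis unfolding has_network_card_def using FK by blast
qed

end


context tgg
begin

lemma left_part:
  assumes K: "infinite K" and LN: "left_narrow T op e K"
  shows "left_narrow BT (bop op) (\<lambda>r. e) K"
  unfolding left_narrow_def topspace_BT
proof (intro allI impI)
  fix U assume U: "U \<subseteq> GB \<and> (\<lambda>r. e) \<in> BT interior_of U"
  obtain V \<epsilon> where v: "openin T V" "e \<in> V" "\<epsilon> > 0" "Obullet G e V \<epsilon> \<subseteq> U"
    using interior_zero U by blast
  have VG: "V \<subseteq> G" using openin_subset[OF v(1)] top_G by simp
  obtain S0 where S0: "S0 \<subseteq> G" "S0 \<lesssim> K" "{op s u | s u. s \<in> S0 \<and> u \<in> V} = G"
  proof -
    have "e \<in> T interior_of V" using v by (simp add: interior_of_openin)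
    moreover have "V \<subseteq> topspace T" using VG top_G by simp
    ultimately have "\<exists>S. S \<subseteq> topspace T \<and> S \<lesssim> K \<and> {op s u | s u. s \<in> S \<and> u \<in> V} = topspace T"
      using LN unfolding left_narrow_def by blast
    then show ?thesis using that unfolding top_G by blast
  qed
  have exs: "\<exists>s. s \<in> S0 \<and> op (iv s) c \<in> V" if c: "c \<in> G" for c
  proof -
    obtain s u where su: "c = op s u" "s \<in> S0" "u \<in> V" using S0(3) c by blast
    then have "s \<in> G" "u \<in> G" using S0(1) VG by auto
    then have "op (iv s) c = u" using su(1) by simp
    then show ?thesis using su by auto
  qed
  define \<sigma> where "\<sigma> c = (SOME s. s \<in> S0 \<and> op (iv s) c \<in> V)" for c
  have \<sigma>: "\<sigma> c \<in> S0 \<and> op (iv (\<sigma> c)) c \<in> V" if "c \<in> G" for c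
    unfolding \<sigma>_def using someI_ex[OF exs[OF that]] .
  define Ss where "Ss = (\<lambda>L. gridf L e) ` {L \<in> lists S0. L \<noteq> []}"
  have SsG: "Ss \<subseteq> GB" unfolding Ss_def using S0(1) gridf_gb by auto
  have SsK: "Ss \<lesssim> K"
  proof -
    have "Ss \<lesssim> {L \<in> lists S0. L \<noteq> []}" unfolding Ss_def by (rule image_lepoll)
    also have "{L \<in> lists S0. L \<noteq> []} \<lesssim> lists S0" by (rule subset_imp_lepoll) auto
    also have "lists S0 \<lesssim> K" using lists_lepoll_inf[OF K S0(2)] .
    finally show ?thesis .
  qed
  have "{bop op s u | s u. s \<in> Ss \<and> u \<in> U} = GB"
  proof
    show "{bop op s u | s u. s \<in> Ss \<and> u \<in> U} \<subseteq> GB" using SsG U bop_in by blast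
    show "GB \<subseteq> {bop op s u | s u. s \<in> Ss \<and> u \<in> U}"
    proof
      fix f assume f: "f \<in> GB"
      obtain N S B where NB: "N > 0" "B \<in> fmeasurable lborel" "measure lborel B < \<epsilon>"
         "\<And>r. r \<in> {0..<1} \<Longrightarrow> r \<notin> B \<Longrightarrow> f r = f (real (nat \<lfloor>real N * r\<rfloor>) / N)"
        by (rule approx_main[OF f v(3), of "\<lambda>N k r. f r = f (real k / N)"]) auto
      define L where "L = map (\<lambda>k. \<sigma> (f (real k / N))) [0..<N]"
      define s where "s = gridf L e"
      have sS: "s \<in> Ss" unfolding Ss_def s_def L_def using NB(1) \<sigma> gb_in'[OF f] by (auto intro!: imageI)
      then have sG: "s \<in> GB" using SsG by blast
      have sr: "s r = \<sigma> (f r)" if r: "r \<in> {0..<1}" "r \<notin> B" for r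
      proof -
        have "s r = \<sigma> (f (real (nat \<lfloor>real N * r\<rfloor>) / N))"
          unfolding s_def L_def using r by (intro gridf_map[OF NB(1)]) auto
        then show ?thesis using NB(4)[OF r] by simp
      qed
      define h where "h = ldiv s f"
      have hG: "h \<in> GB" unfolding h_def using ldiv_in[OF sG f] .
      have ms: "{r \<in> {0..<1}. h r \<notin> V} \<in> sets lborel" using gb_sets[OF hG] .
      have "measure lborel {r \<in> {0..<1}. h r \<notin> V} < \<epsilon>"
      proof (rule meas_lt[OF ms _ NB(2,3)])
        show "{r \<in> {0..<1}. h r \<notin> V} \<subseteq> B"
        proof
          fix r assume r: "r \<in> {r \<in> {0..<1}. h r \<notin> V}"
          show "r \<in> B"
          proof (rule ccontr)
            assume "r \<notin> B"
            then have "h r = op (iv (\<sigma> (f r))) (f r)" using sr r unfolding h_def ldiv_def by auto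
            then show False using r \<sigma>[OF gb_in'[OF f]] by auto
          qed
        qed
      qed
      then have "h \<in> U" using hG v(4) by (auto simp: in_Ob_iff)
      moreover have "f = bop op s h" unfolding h_def using bop_ldiv[OF sG f] by simp
      ultimately show "f \<in> {bop op s u | s u. s \<in> Ss \<and> u \<in> U}" using sS by blast
    qed
  qed
  then show "\<exists>S\<subseteq>GB. S \<lesssim> K \<and> {bop op s u | s u. s \<in> S \<and> u \<in> U} = GB"
    using SsG SsK by blast
qed

end


context tgg
begin

lemma right_part:
  assumes K: "infinite K" and RN: "right_narrow T op e K"
  shows "right_narrow BT (bop op) (\<lambda>r. e) K"
  unfolding right_narrow_def topspace_BT
proof (intro allI impI)
  fix U assume U: "U \<subseteq> GB \<and> (\<lambda>r. e) \<in> BT interior_of U"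
  obtain V \<epsilon> where v: "openin T V" "e \<in> V" "\<epsilon> > 0" "Obullet G e V \<epsilon> \<subseteq> U"
    using interior_zero U by blast
  have VG: "V \<subseteq> G" using openin_subset[OF v(1)] top_G by simp
  obtain S0 where S0: "S0 \<subseteq> G" "S0 \<lesssim> K" "{op u s | s u. s \<in> S0 \<and> u \<in> V} = G"
  proof -
    have "e \<in> T interior_of V" using v by (simp add: interior_of_openin)
    moreover have "V \<subseteq> topspace T" using VG top_G by simp
    ultimately have "\<exists>S. S \<subseteq> topspace T \<and> S \<lesssim> K \<and> {op u s | s u. s \<in> S \<and> u \<in> V} = topspace T"
      using RN unfolding right_narrow_def by blast
    then show ?thesis using that unfolding top_G by blast
  qed
  have exs: "\<exists>s. s \<in> S0 \<and> (\<exists>v\<in>V. op v s = c)" if c: "c \<in> G" for c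
    using S0(3) c by blast
  define \<rho> where "\<rho> c = (SOME s. s \<in> S0 \<and> (\<exists>v\<in>V. op v s = c))" for c
  have \<rho>: "\<rho> c \<in> S0 \<and> (\<exists>v\<in>V. op v (\<rho> c) = c)" if "c \<in> G" for c
    unfolding \<rho>_def using someI_ex[OF exs[OF that]] .
  define Ss where "Ss = (\<lambda>L. gridf L e) ` {L \<in> lists (insert e S0). L \<noteq> []}"
  have SsG: "Ss \<subseteq> GB"
  proof
    fix x assume "x \<in> Ss"
    then obtain L where L: "x = gridf L e" "L \<in> lists (insert e S0)" "L \<noteq> []" unfolding Ss_def by blast
    then have "set L \<subseteq> G" using S0(1) by auto
    then show "x \<in> GB" using gridf_gb L by blast
  qed
  have SsK: "Ss \<lesssim> K"
  proof -
    have "Ss \<lesssim> {L \<in> lists (insert e S0). L \<noteq> []}" unfolding Ss_def by (rule image_lepoll)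
    also have "{L \<in> lists (insert e S0). L \<noteq> []} \<lesssim> lists (insert e S0)" by (rule subset_imp_lepoll) auto
    also have "lists (insert e S0) \<lesssim> K" using lists_lepoll_inf[OF K insert_lepoll_inf[OF K S0(2)]] .
    finally show ?thesis .
  qed
  have "{bop op u s | s u. s \<in> Ss \<and> u \<in> U} = GB"
  proof
    show "{bop op u s | s u. s \<in> Ss \<and> u \<in> U} \<subseteq> GB" using SsG U bop_in by blast
    show "GB \<subseteq> {bop op u s | s u. s \<in> Ss \<and> u \<in> U}"
    proof
      fix f assume f: "f \<in> GB"
      obtain S where st: "stp S f" using gb_stp f by metis
      obtain N :: nat where N: "N > 0" "real (card S) / N < \<epsilon>" using choose_N[OF v(3)] by blast
      obtain B where B: "B \<in> fmeasurable lborel" "measure lborel B \<le> real (card S) / N"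
         "\<forall>r\<in>{0..<1}. cbad S N (nat \<lfloor>real N * r\<rfloor>) \<longrightarrow> r \<in> B"
         "\<forall>r\<in>{0..<1}. \<not> cbad S N (nat \<lfloor>real N * r\<rfloor>) \<longrightarrow> f r = f (real (nat \<lfloor>real N * r\<rfloor>) / N)"
        using cell_bound[OF st N(1)] by blast
      define L where "L = map (\<lambda>k. if cbad S N k then e else \<rho> (f (real k / N))) [0..<N]"
      define s where "s = gridf L e"
      have sS: "s \<in> Ss" unfolding Ss_def s_def L_def using N(1) \<rho> gb_in'[OF f] by (auto intro!: imageI)
      then have sG: "s \<in> GB" using SsG by blast
      have sr1: "s r = e" if r: "r \<in> {0..<1}" "cbad S N (nat \<lfloor>real N * r\<rfloor>)" for r
      proof -
        have "s r = (if cbad S N (nat \<lfloor>real N * r\<rfloor>) then e else \<rho> (f (real (nat \<lfloor>real N * r\<rfloor>) / N)))"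
          unfolding s_def L_def using r by (intro gridf_map[OF N(1)]) auto
        then show ?thesis using r by simp
      qed
      have sr2: "s r = \<rho> (f r)" if r: "r \<in> {0..<1}" "\<not> cbad S N (nat \<lfloor>real N * r\<rfloor>)" for r
      proof -
        have "s r = (if cbad S N (nat \<lfloor>real N * r\<rfloor>) then e else \<rho> (f (real (nat \<lfloor>real N * r\<rfloor>) / N)))"
          unfolding s_def L_def using r by (intro gridf_map[OF N(1)]) auto
        then show ?thesis using r B(4) by simp
      qed
      define \<Phi> where "\<Phi> a b = (if \<exists>v\<in>V. op v a = b then SOME v. v \<in> V \<and> op v a = b else b)" for a b
      define u where "u r = (if r \<in> {0..<1} then \<Phi> (s r) (f r) else e)" for r
      have \<Phi>: "op (\<Phi> (s r) (f r)) (s r) = f r" if r: "r \<in> {0..<1}" for r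
      proof (cases "\<exists>v\<in>V. op v (s r) = f r")
        case True
        then show ?thesis unfolding \<Phi>_def using someI_ex[of "\<lambda>v. v \<in> V \<and> op v (s r) = f r"] by auto
      next
        case False
        have "cbad S N (nat \<lfloor>real N * r\<rfloor>)"
        proof (rule ccontr)
          assume "\<not> cbad S N (nat \<lfloor>real N * r\<rfloor>)"
          then have "s r = \<rho> (f r)" using sr2 r by blast
          then show False using False \<rho>[OF gb_in'[OF f]] by auto
        qed
        then have "s r = e" using sr1 r by blast
        then show ?thesis using False gb_in'[OF f] unfolding \<Phi>_def by simp
      qed
      have \<Phi>V: "\<Phi> (s r) (f r) \<in> V" if r: "r \<in> {0..<1}" "r \<notin> B" for r
      proof -
        have "\<not> cbad S N (nat \<lfloor>real N * r\<rfloor>)" using B(3) r by blast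
        then have "s r = \<rho> (f r)" using sr2 r by blast
        then have "\<exists>v\<in>V. op v (s r) = f r" using \<rho>[OF gb_in'[OF f]] by auto
        then show ?thesis unfolding \<Phi>_def using someI_ex[of "\<lambda>v. v \<in> V \<and> op v (s r) = f r"] by auto
      qed
      have \<Phi>G: "\<Phi> (s r) (f r) \<in> G" for r
      proof (cases "\<exists>v\<in>V. op v (s r) = f r")
        case True
        then show ?thesis unfolding \<Phi>_def using someI_ex[of "\<lambda>v. v \<in> V \<and> op v (s r) = f r"] VG by auto
      next
        case False then show ?thesis unfolding \<Phi>_def using gb_in'[OF f] by simp
      qed
      have uG: "u \<in> GB"
      proof -
        obtain S' where st': "stp S' s" using gb_stp sG by metis
        show ?thesis
        proof (rule gbulletI[where S="S' \<union> S"])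
          show "stp (S' \<union> S) u" by (rule stp_cong[OF stp_comb[OF st' st, of \<Phi>]]) (simp add: u_def)
        qed (auto simp: u_def \<Phi>G)
      qed
      have ms: "{r \<in> {0..<1}. u r \<notin> V} \<in> sets lborel" using gb_sets[OF uG] .
      have "measure lborel {r \<in> {0..<1}. u r \<notin> V} < \<epsilon>"
      proof (rule meas_lt[OF ms _ B(1)])
        show "{r \<in> {0..<1}. u r \<notin> V} \<subseteq> B" using \<Phi>V unfolding u_def by auto
        show "measure lborel B < \<epsilon>" using B(2) N(2) by simp
      qed
      then have "u \<in> U" using uG v(4) by (auto simp: in_Ob_iff)
      moreover have "f = bop op u s"
      proof
        fix r show "f r = bop op u s r"
        proof (cases "r \<in> {0..<1}")
          case True then show ?thesis using \<Phi>[OF True] by (simp add: bop_def u_def)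
        next
          case False
          have "u r = e" unfolding u_def using False by (rule if_not_P)
          then show ?thesis using gb_out[OF f False] gb_out[OF sG False] by (simp add: bop_def)
        qed
      qed
      ultimately show "f \<in> {bop op u s | s u. s \<in> Ss \<and> u \<in> U}" using sS by blast
    qed
  qed
  then show "\<exists>S\<subseteq>GB. S \<lesssim> K \<and> {bop op u s | s u. s \<in> S \<and> u \<in> U} = GB"
    using SsG SsK by blast
qed

end


lemma stp_borel:
  assumes st: "stp S (H::real\<Rightarrow>real)"
  shows "(\<lambda>x. indicator {0..<1::real} x *\<^sub>R H x) \<in> borel_measurable lborel"
proof -
  have "{w \<in> space lborel. a < indicator {0..<1::real} w *\<^sub>R H w} \<in> sets lborel" for a
  proof -
    have eq: "{w \<in> space lborel. a < indicator {0..<1::real} w *\<^sub>R H w} =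
       {r \<in> {0..<1}. a < H r} \<union> (if a < 0 then - {0..<1} else {})"
      by (auto simp: indicator_def)
    have m1: "{r \<in> {0..<1}. a < H r} \<in> sets lborel" using stp_sets[OF st, of "\<lambda>v. a < v"] .
    have m2: "(if a < 0 then - {0..<1::real} else {}) \<in> sets lborel" by auto
    show ?thesis unfolding eq using m1 m2 by (rule sets.Un)
  qed
  then show ?thesis by (simp add: borel_measurable_iff_greater)
qed

lemma stp_integrable:
  assumes st: "stp S (H::real\<Rightarrow>real)" and bd: "\<And>r. \<bar>H r\<bar> \<le> c"
  shows "set_integrable lborel {0..<1} H"
  unfolding set_integrable_def
proof (rule integrableI_bounded_set[where A="{0..<1}" and B=c])
  show "(\<lambda>x. indicator {0..<1::real} x *\<^sub>R H x) \<in> borel_measurable lborel" by (rule stp_borel[OF st])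
  show "AE x in lborel. x \<in> {0..<1} \<longrightarrow> norm (indicator {0..<1::real} x *\<^sub>R H x) \<le> c"
    using bd by (auto simp: indicator_def)
  show "AE x in lborel. x \<notin> {0..<1} \<longrightarrow> indicator {0..<1::real} x *\<^sub>R H x = 0"
    by (auto simp: indicator_def)
qed auto

lemma set_integral_indicator_sub:
  fixes c :: real
  assumes "A \<subseteq> {0..<1::real}" "A \<in> sets lborel"
  shows "(LINT r:{0..<1}|lborel. c * indicator A r) = c * measure lborel A"
proof -
  have "(\<lambda>x. indicator {0..<1::real} x *\<^sub>R (c * indicator A x)) = (\<lambda>x. c * indicator A x)"
    using assms(1) by (auto simp: indicator_def fun_eq_iff)
  then show ?thesis unfolding set_lebesgue_integral_def by simp
qed

lemma set_integrable_indicator_sub: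
  fixes c :: real
  assumes "A \<subseteq> {0..<1::real}" "A \<in> sets lborel"
  shows "set_integrable lborel {0..<1} (\<lambda>r. c * indicator A r)"
proof -
  have eq: "(\<lambda>x. indicator {0..<1::real} x *\<^sub>R (c * indicator A x)) = (\<lambda>x. c * indicator A x)"
    using assms(1) by (auto simp: indicator_def fun_eq_iff)
  have "emeasure lborel A \<le> emeasure lborel {0..<1::real}" using assms by (intro emeasure_mono) auto
  then have "emeasure lborel A < \<infinity>" using le_less_trans by fastforce
  then show ?thesis unfolding set_integrable_def eq using assms by auto
qed


lemma min1_tri: "(a::real) \<le> b + c \<Longrightarrow> 0 \<le> b \<Longrightarrow> 0 \<le> c \<Longrightarrow> min 1 a \<le> min 1 b + min 1 c"
  by linarith

context tgg
begin

definition FF where "FF m f g r = min 1 (m (f r) (g r))"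
definition dd where "dd m f g = (LINT r:{0..<1}|lborel. FF m f g r)"

lemma FF_stp: assumes f: "f \<in> GB" and g: "g \<in> GB" obtains S where "stp S (FF m f g)"
proof -
  obtain S S' where s: "stp S f" "stp S' g" using gb_stp f g by metis
  show ?thesis using that stp_comb[OF s, of "\<lambda>a b. min 1 (m a b)"] unfolding FF_def by blast
qed

lemma FF_int:
  assumes ms: "Metric_space M0 m" and f: "f \<in> GB" and g: "g \<in> GB"
  shows "set_integrable lborel {0..<1} (FF m f g)"
proof -
  obtain S where st: "stp S (FF m f g)" using FF_stp f g by metis
  show ?thesis
    by (rule stp_integrable[OF st, of 1]) (use Metric_space.nonneg[OF ms] in \<open>auto simp: FF_def\<close>)
qed

lemma dd_metric:
  assumes ms: "Metric_space M0 m" and MG: "M0 = G"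
  shows "Metric_space GB (dd m)"
proof
  interpret M: Metric_space M0 m by (rule ms)
  fix f g h :: "real \<Rightarrow> 'a"
  show "0 \<le> dd m f g" unfolding dd_def set_lebesgue_integral_def
    by (rule integral_nonneg_AE) (auto simp: FF_def indicator_def)
  show "dd m f g = dd m g f" unfolding dd_def FF_def by (simp add: M.commute)
  {
    assume f: "f \<in> GB" and g: "g \<in> GB"
    show "dd m f g = 0 \<longleftrightarrow> f = g"
    proof
      assume fg: "f = g"
      have "FF m f g = (\<lambda>r. 0)" unfolding fg FF_def using gb_in'[OF g] MG by (auto simp: fun_eq_iff)
      then show "dd m f g = 0" unfolding dd_def by (simp add: set_lebesgue_integral_def)
    next
      assume d0: "dd m f g = 0"
      show "f = g"
      proof (rule ccontr)
        assume "f \<noteq> g"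
        then obtain r0 where ne: "f r0 \<noteq> g r0" by blast
        have r0: "r0 \<in> {0..<1}" using ne gb_out[OF f] gb_out[OF g] by metis
        obtain S where st: "stp S (FF m f g)" using FF_stp f g by metis
        obtain \<delta> where d: "\<delta> > 0" "r0 + \<delta> \<le> 1" "\<forall>y. r0 \<le> y \<and> y < r0 + \<delta> \<longrightarrow> FF m f g y = FF m f g r0"
          using stp_right[OF st] r0 by auto
        define c where "c = FF m f g r0"
        have "m (f r0) (g r0) > 0" using ne gb_in'[OF f] gb_in'[OF g] MG M.nonneg[of "f r0" "g r0"] M.zero
          by (metis order_le_less)
        then have cpos: "c > 0" unfolding c_def FF_def by simp
        define I where "I = {r0..<r0 + \<delta>}"
        have I01: "I \<subseteq> {0..<1}" using r0 d unfolding I_def by auto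
        have Is: "I \<in> sets lborel" unfolding I_def by simp
        have "c * \<delta> = c * measure lborel I" using d unfolding I_def by (simp add: meas_Ico)
        also have "\<dots> = (LINT r:{0..<1}|lborel. c * indicator I r)" using set_integral_indicator_sub[OF I01 Is, of c] by (rule sym)
        also have "\<dots> \<le> dd m f g" unfolding dd_def
        proof (rule set_integral_mono[OF set_integrable_indicator_sub[OF I01 Is] FF_int[OF ms f g]])
          fix x assume x: "x \<in> {0..<1::real}"
          show "c * indicator I x \<le> FF m f g x"
          proof (cases "x \<in> I")
            case True
            then have "r0 \<le> x \<and> x < r0 + \<delta>" by (simp add: I_def)
            then have "FF m f g x = c" using d(3) unfolding c_def by blast
            then show ?thesis using True by simp
          next
            case False then show ?thesis by (simp add: FF_def)
          qed
        qed
        finally have "c * \<delta> \<le> 0" using d0 by simp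
        moreover have "c * \<delta> > 0" using cpos d(1) by simp
        ultimately show False by simp
      qed
    qed
  }
  assume f: "f \<in> GB" and g: "g \<in> GB" and h: "h \<in> GB"
  have "dd m f h \<le> (LINT r:{0..<1}|lborel. FF m f g r + FF m g h r)" unfolding dd_def
  proof (rule set_integral_mono[OF FF_int[OF ms f h] set_integral_add(1)[OF FF_int[OF ms f g] FF_int[OF ms g h]]])
    fix x :: real
    have "m (f x) (h x) \<le> m (f x) (g x) + m (g x) (h x)" using gb_in'[OF f] gb_in'[OF g] gb_in'[OF h] MG
      by (intro M.triangle) auto
    then show "FF m f h x \<le> FF m f g x + FF m g h x" unfolding FF_def by (intro min1_tri) auto
  qed
  also have "\<dots> = dd m f g + dd m g h" unfolding dd_def
    by (rule set_integral_add(2)[OF FF_int[OF ms f g] FF_int[OF ms g h]])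
  finally show "dd m f h \<le> dd m f g + dd m g h" .
qed

end


context tgg
begin

lemma metric_part:
  assumes MZ: "metrizable_space T"
  shows "metrizable_space BT"
proof -
  obtain M0 m where ms: "Metric_space M0 m" and Tm: "T = Metric_space.mtopology M0 m"
    using MZ unfolding metrizable_space_def by blast
  interpret M: Metric_space M0 m by (rule ms)
  have MG: "M0 = G" using top_G Tm M.topspace_mtopology by simp
  interpret D: Metric_space GB "dd m" by (rule dd_metric[OF ms MG])
  have "BT = D.mtopology"
    unfolding topology_eq
  proof (intro allI iffI)
    fix U assume U: "openin BT U"
    show "openin D.mtopology U"
      unfolding D.openin_mtopology
    proof (intro conjI allI impI)
      show "U \<subseteq> GB" using U unfolding openin_BT' by blast
      fix f assume fU: "f \<in> U"
      then have f: "f \<in> GB" using U unfolding openin_BT' by blast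
      obtain V \<epsilon> where v: "openin T V" "e \<in> V" "\<epsilon> > 0" "bop op f ` Obullet G e V \<epsilon> \<subseteq> U"
        using U fU unfolding openin_BT' by blast
      define C where "C = f ` {0..<1}"
      have fC: "finite C" unfolding C_def using gb_stp[OF f] stp_finite_range by blast
      have CG: "C \<subseteq> G" unfolding C_def using gb_in'[OF f] by auto
      have exeta: "\<exists>\<eta>>0. \<forall>x\<in>G. m c x < \<eta> \<longrightarrow> op (iv c) x \<in> V" if c: "c \<in> C" for c
      proof -
        have cG: "c \<in> G" using c CG by blast
        define W where "W = {x \<in> topspace T. op (iv c) x \<in> V}"
        have W: "openin T W" unfolding W_def by (rule openin_continuous_map_preimage[OF cont_lmul[OF ginv_in[OF cG]] v(1)])
        have cW: "c \<in> W" unfolding W_def using cG v(2) top_G by simp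
        obtain r where r: "r > 0" "M.mball c r \<subseteq> W" using W cW unfolding Tm M.openin_mtopology by blast
        have "\<forall>x\<in>G. m c x < r \<longrightarrow> op (iv c) x \<in> V"
        proof (intro ballI impI)
          fix x assume "x \<in> G" "m c x < r"
          then have "x \<in> M.mball c r" using cG MG M.in_mball[of x c r] by simp
          then show "op (iv c) x \<in> V" using r(2) unfolding W_def by blast
        qed
        then show ?thesis using r(1) by blast
      qed
      define \<eta> where "\<eta> c = (SOME \<eta>. \<eta> > 0 \<and> (\<forall>x\<in>G. m c x < \<eta> \<longrightarrow> op (iv c) x \<in> V))" for c
      have \<eta>: "\<eta> c > 0 \<and> (\<forall>x\<in>G. m c x < \<eta> c \<longrightarrow> op (iv c) x \<in> V)" if "c \<in> C" for c
        unfolding \<eta>_def using someI_ex[OF exeta[OF that]] by blast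
      define \<eta>0 where "\<eta>0 = Min (insert 1 (\<eta> ` C))"
      have e0pos: "\<eta>0 > 0" unfolding \<eta>0_def using fC \<eta> by (subst Min_gr_iff) auto
      have e01: "\<eta>0 \<le> 1" unfolding \<eta>0_def using fC by (intro Min_le) auto
      have e0c: "\<eta>0 \<le> \<eta> c" if "c \<in> C" for c unfolding \<eta>0_def using fC that by (intro Min_le) auto
      define \<delta> where "\<delta> = \<epsilon> * \<eta>0"
      have dpos: "\<delta> > 0" unfolding \<delta>_def using v(3) e0pos by simp
      have "D.mball f \<delta> \<subseteq> U"
      proof
        fix g assume "g \<in> D.mball f \<delta>"
        then have g: "g \<in> GB" and dfg: "dd m f g < \<delta>" by auto
        define A where "A = {r \<in> {0..<1}. op (iv (f r)) (g r) \<notin> V}"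
        have As: "A \<in> sets lborel" unfolding A_def
          using gb_sets[OF ldiv_in[OF f g], of "\<lambda>x. x \<notin> V"] by (simp add: ldiv_def)
        define Mk where "Mk = {x \<in> space lborel. \<eta>0 \<le> indicator {0..<1::real} x *\<^sub>R FF m f g x}"
        have Mk_eq: "Mk = {r \<in> {0..<1}. \<eta>0 \<le> FF m f g r}" unfolding Mk_def using e0pos
          by (auto simp: indicator_def)
        obtain S where st: "stp S (FF m f g)" using FF_stp f g by metis
        have Mkf: "Mk \<in> fmeasurable lborel" unfolding Mk_eq by (rule stp_fmeas[OF st])
        have AM: "A \<subseteq> Mk"
        proof
          fix r assume r: "r \<in> A"
          then have r01: "r \<in> {0..<1}" unfolding A_def by blast
          show "r \<in> Mk" unfolding Mk_eq
          proof (rule ccontr)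
            assume "r \<notin> {r \<in> {0..<1}. \<eta>0 \<le> FF m f g r}"
            then have "FF m f g r < \<eta>0" using r01 by auto
            then have "m (f r) (g r) < \<eta>0" using e01 unfolding FF_def by linarith
            moreover have "f r \<in> C" unfolding C_def using r01 by blast
            ultimately have "op (iv (f r)) (g r) \<in> V" using \<eta> e0c gb_in'[OF g] by fastforce
            then show False using r unfolding A_def by blast
          qed
        qed
        have "measure lborel Mk \<le> (\<integral>x. indicator {0..<1::real} x *\<^sub>R FF m f g x \<partial>lborel) / \<eta>0"
          unfolding Mk_def
        proof (rule integral_Markov_inequality_measure[where A="{0..<1}"])
          show "integrable lborel (\<lambda>x. indicator {0..<1::real} x *\<^sub>R FF m f g x)"
            using FF_int[OF ms f g] unfolding set_integrable_def .
        qed (auto simp: FF_def indicator_def e0pos)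
        also have "\<dots> = dd m f g / \<eta>0" unfolding dd_def set_lebesgue_integral_def ..
        also have "\<dots> < \<epsilon>" using dfg e0pos unfolding \<delta>_def by (simp add: divide_less_eq)
        finally have "measure lborel A < \<epsilon>" using meas_mono[OF AM As Mkf] by linarith
        then have "g \<in> bop op f ` Obullet G e V \<epsilon>" using in_translate[OF f g] unfolding A_def by blast
        then show "g \<in> U" using v(4) by blast
      qed
      then show "\<exists>r>0. D.mball f r \<subseteq> U" using dpos by blast
    qed
  next
    fix U assume U: "openin D.mtopology U"
    show "openin BT U" unfolding openin_BT'
    proof (intro conjI ballI)
      show "U \<subseteq> GB" using U D.openin_mtopology by blast
      fix f assume fU: "f \<in> U"
      then have f: "f \<in> GB" using U D.openin_mtopology by blast
      obtain \<delta> where d: "\<delta> > 0" "D.mball f \<delta> \<subseteq> U" using U fU D.openin_mtopology by blast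
      define C where "C = f ` {0..<1}"
      have fC: "finite C" unfolding C_def using gb_stp[OF f] stp_finite_range by blast
      have CG: "C \<subseteq> G" unfolding C_def using gb_in'[OF f] by auto
      have exW: "\<exists>W. openin T W \<and> e \<in> W \<and> (\<forall>y\<in>W. op c y \<in> M.mball c (\<delta>/2))" if c: "c \<in> C" for c
      proof -
        have cG: "c \<in> G" using c CG by blast
        have "openin T (M.mball c (\<delta>/2))" unfolding Tm by simp
        moreover have "op c e \<in> M.mball c (\<delta>/2)" using cG MG d(1) M.in_mball[of "op c e" c "\<delta>/2"] by simp
        ultimately show ?thesis using nbhd_lmul[OF cG, of "M.mball c (\<delta>/2)" e] by simp
      qed
      define W where "W c = (SOME W. openin T W \<and> e \<in> W \<and> (\<forall>y\<in>W. op c y \<in> M.mball c (\<delta>/2)))" for c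
      have W: "openin T (W c) \<and> e \<in> W c \<and> (\<forall>y\<in>W c. op c y \<in> M.mball c (\<delta>/2))" if "c \<in> C" for c
        unfolding W_def using someI_ex[OF exW[OF that]] .
      define V where "V = (\<Inter>c\<in>C. W c) \<inter> topspace T"
      have Vo: "openin T V" unfolding V_def using fC W by (intro openin_INT) auto
      have eV: "e \<in> V" unfolding V_def using W top_G by auto
      have "bop op f ` Obullet G e V (\<delta>/2) \<subseteq> U"
      proof
        fix x assume "x \<in> bop op f ` Obullet G e V (\<delta>/2)"
        then obtain h where h: "h \<in> Obullet G e V (\<delta>/2)" and x: "x = bop op f h" by blast
        have hg: "h \<in> GB" and mh: "measure lborel {r \<in> {0..<1}. h r \<notin> V} < \<delta>/2" using h by (auto simp: in_Ob_iff)
        have xg: "x \<in> GB" unfolding x using bop_in[OF f hg] .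
        define Bad where "Bad = {r \<in> {0..<1}. h r \<notin> V}"
        have Bs: "Bad \<in> sets lborel" unfolding Bad_def using gb_sets[OF hg] .
        have B01: "Bad \<subseteq> {0..<1}" unfolding Bad_def by blast
        have i1: "set_integrable lborel {0..<1} (\<lambda>r. (1::real) * indicator Bad r)" by (rule set_integrable_indicator_sub[OF B01 Bs])
        have i2: "set_integrable lborel {0..<1} (\<lambda>r::real. \<delta>/2)"
          by (rule stp_integrable[of "{}" _ "\<delta>/2"]) (use d(1) in \<open>auto simp: stp_def\<close>)
        have "dd m f x \<le> (LINT r:{0..<1}|lborel. 1 * indicator Bad r + \<delta>/2)" unfolding dd_def
        proof (rule set_integral_mono[OF FF_int[OF ms f xg] set_integral_add(1)[OF i1 i2]])
          fix r :: real assume r: "r \<in> {0..<1}"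
          show "FF m f x r \<le> 1 * indicator Bad r + \<delta>/2"
          proof (cases "r \<in> Bad")
            case True then show ?thesis using d(1) by (simp add: FF_def)
          next
            case False
            then have hv: "h r \<in> V" using r unfolding Bad_def by blast
            have fc: "f r \<in> C" unfolding C_def using r by blast
            then have "h r \<in> W (f r)" using hv unfolding V_def by blast
            then have "op (f r) (h r) \<in> M.mball (f r) (\<delta>/2)" using W[OF fc] by blast
            then have "m (f r) (x r) < \<delta>/2" unfolding x bop_def by simp
            then show ?thesis using False unfolding FF_def by simp
          qed
        qed
        also have "\<dots> = (LINT r:{0..<1}|lborel. 1 * indicator Bad r) + (LINT r:{0..<1::real}|lborel. \<delta>/2)"
          using set_integral_add(2)[OF i1 i2] by simp
        also have "\<dots> = measure lborel Bad + \<delta>/2"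
          using set_integral_indicator_sub[OF B01 Bs, of 1] set_integral_const[of "{0..<1::real}" lborel "\<delta>/2"]
          by (simp add: measure_Ico01)
        also have "\<dots> < \<delta>" using mh unfolding Bad_def by simp
        finally have "x \<in> D.mball f \<delta>" using f xg by simp
        then show "x \<in> U" using d(2) by blast
      qed
      then show "\<exists>V \<epsilon>. openin T V \<and> e \<in> V \<and> \<epsilon> > 0 \<and> bop op f ` Obullet G e V \<epsilon> \<subseteq> U"
        using Vo eV d(1) by (intro exI[of _ V] exI[of _ "\<delta>/2"]) simp
    qed
  qed
  then show ?thesis unfolding metrizable_space_def using dd_metric[OF ms MG] by blast
qed

end


theorem mainTheorem10:
  fixes G :: "'a set" and op :: "'a \<Rightarrow> 'a \<Rightarrow> 'a" and e :: 'a and T :: "'a topology"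
    and K :: "'k set"
  assumes "infinite K"
    and "topological_gyrogroup G op e T"
  shows "(metrizable_space T \<longrightarrow> metrizable_space (bullet_topology G op e T))
    \<and> (has_local_base_card T e K \<longrightarrow>
         has_local_base_card (bullet_topology G op e T) (\<lambda>r. e) K)
    \<and> (has_network_card T K \<longrightarrow> has_network_card (bullet_topology G op e T) K)
    \<and> (has_dense_card T K \<longrightarrow> has_dense_card (bullet_topology G op e T) K)
    \<and> (narrow T op e K \<longrightarrow> narrow (bullet_topology G op e T) (bop op) (\<lambda>r. e) K)"
proof -
  have gy: "gyrogroup G op e" using assms(2) by (simp add: topological_gyrogroup_def)
  interpret tgg G op e T
    by (intro tgg.intro gg.intro tgg_axioms.intro gy assms(2))
  show ?thesis
    using metric_part base_part[OF assms(1)] network_part[OF assms(1)] dense_part[OF assms(1)]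
      left_part[OF assms(1)] right_part[OF assms(1)]
    unfolding narrow_def by blast
qed

end
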